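(* For any categorial sequential allocation mechanism $f_\mathcal O$ and any assignment of each agent as optimistic or pessimistic, there exists a profile $P$ such that for all agents $j$: (1) if $j$ is optimistic, then the rank of the bundle allocated to $j$ is exactly $n^p+1-\prod_{l=K_j}^{p}k_{j,\mathcal O_j(l)}$; (2) if $j$ is pessimistic, then the rank of the bundle allocated to $j$ is exactly $n^p-\sum_{l=1}^{p}(k_{j,\mathcal O_j(l)}-1)$; and moreover (3) there exists an allocation in which at least $n-1$ agents get their top-ranked bundles and the remaining agent gets her top-ranked or second-ranked bundle.
   Context: Basic categorized domain: $n$ agents, $p$ categories $D_i=\{1,\ldots,n\}$ of indivisible items, bundles $\mathfrak D=D_1\times\cdots\times D_p$; each agent $j$ has a linear order $R_j$ over $\mathfrak D$ (a profile is $(R_1,\ldots,R_n)$). An allocation gives each agent one bundle so that each item of each category goes to exactly one agent. The rank of a bundle in $R$ is its position, the top having rank $1$ and the bottom rank $n^p$. CSAM $f_\mathcal O$: given a linear order $\mathcal O$ over $\{1,\ldots,n\}\times\{1,\ldots,p\}$, in rounds $t=1,\ldots,np$, if the $t$-th element of $\mathcal O$ is $(j,i)$ then agent $j$ chooses an item $d_{j,i}$ from $D_{i,t}$, the items of $D_i$ not yet chosen at the start of round $t$. Agent $j$ receives $(d_{j,1},\ldots,d_{j,p})$. Each agent is fixed in advance to be optimistic or pessimistic. When agent $j$ chooses from $D_i$ in round $t$, a bundle is available to her if for each category $l$ from which she has already chosen its $l$-th component equals $d_{j,l}$, and for each other category $l$ its $l$-th component lies in $D_{l,t}$. An optimistic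 agent chooses the $i$-th component of her top-ranked available bundle. A pessimistic agent chooses the $d\in D_{i,t}$ for which her lowest-ranked available bundle with $i$-th component $d$ is highest in $R_j$. Notation: $\mathcal O_j(l)$ is the $l$-th category agent $j$ chooses from in $\mathcal O$. $k_{j,i}$ is $n$ minus the number of agents who choose from $D_i$ before $j$ in $\mathcal O$. $K_j$ is the smallest $K\in\{1,\ldots,p\}$ such that for every $l$ with $K<l\leq p$, no agent chooses from category $\mathcal O_j(l)$ in any round strictly between the rounds of $(j,\mathcal O_j(K))$ and $(j,\mathcal O_j(l))$. *)

theory Defs
  imports Main
begin

text \<open>Conventions: agents are 0..n-1, categories are 0..p-1, the items of every
category are 0..n-1. A bundle is a list of length p whose i-th entry is the item
of category i. A preference is a linear order R on the set of bundles, where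
(a,b) \<in> R means that a is ranked at or above b.\<close>

definition bundles :: "nat \<Rightarrow> nat \<Rightarrow> nat list set" where
  "bundles n p = {b. length b = p \<and> (\<forall>i<p. b ! i < n)}"

definition is_pref :: "nat \<Rightarrow> nat \<Rightarrow> nat list rel \<Rightarrow> bool" where
  "is_pref n p R \<longleftrightarrow> linear_order_on (bundles n p) R"

definition is_profile :: "nat \<Rightarrow> nat \<Rightarrow> (nat \<Rightarrow> nat list rel) \<Rightarrow> bool" where
  "is_profile n p P \<longleftrightarrow> (\<forall>j<n. is_pref n p (P j))"

text \<open>Rank = position in the order (top has rank 1).\<close>
definition rank :: "nat \<Rightarrow> nat \<Rightarrow> nat list rel \<Rightarrow> nat list \<Rightarrow> nat" where
  "rank n p R b = card {a \<in> bundles n p. (a, b) \<in> R}"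

text \<open>An order O over agents \<times> categories, as the list of its elements.\<close>
definition valid_order :: "nat \<Rightarrow> nat \<Rightarrow> (nat \<times> nat) list \<Rightarrow> bool" where
  "valid_order n p Ord \<longleftrightarrow> distinct Ord \<and> set Ord = {0..<n} \<times> {0..<p}"

type_synonym state = "nat \<Rightarrow> nat \<Rightarrow> nat option"
  \<comment> \<open>s j i = Some d: agent j has already chosen item d from category i\<close>

definition remaining :: "nat \<Rightarrow> state \<Rightarrow> nat \<Rightarrow> nat set" where
  "remaining n s i = {d. d < n \<and> \<not> (\<exists>j. s j i = Some d)}"

definition available :: "nat \<Rightarrow> nat \<Rightarrow> state \<Rightarrow> nat \<Rightarrow> nat list set" where
  "available n p s j = {b \<in> bundles n p. \<forall>l<p.
     (case s j l of Some d \<Rightarrow> b ! l = d | None \<Rightarrow> b ! l \<in> remaining n s l)}"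

definition opt_choice :: "nat \<Rightarrow> nat \<Rightarrow> nat list rel \<Rightarrow> state \<Rightarrow> nat \<Rightarrow> nat \<Rightarrow> nat" where
  "opt_choice n p R s j i =
     (THE b. b \<in> available n p s j \<and> (\<forall>b'\<in>available n p s j. (b, b') \<in> R)) ! i"

definition worst :: "nat \<Rightarrow> nat \<Rightarrow> nat list rel \<Rightarrow> state \<Rightarrow> nat \<Rightarrow> nat \<Rightarrow> nat \<Rightarrow> nat list" where
  "worst n p R s j i d =
     (THE b. b \<in> available n p s j \<and> b ! i = d \<and>
        (\<forall>b'\<in>available n p s j. b' ! i = d \<longrightarrow> (b', b) \<in> R))"

definition pess_choice :: "nat \<Rightarrow> nat \<Rightarrow> nat list rel \<Rightarrow> state \<Rightarrow> nat \<Rightarrow> nat \<Rightarrow> nat" where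
  "pess_choice n p R s j i =
     (THE d. d \<in> remaining n s i \<and>
        (\<forall>d'\<in>remaining n s i. (worst n p R s j i d, worst n p R s j i d') \<in> R))"

text \<open>optim j = True: agent j is optimistic; False: pessimistic.\<close>
definition step :: "nat \<Rightarrow> nat \<Rightarrow> (nat \<Rightarrow> bool) \<Rightarrow> (nat \<Rightarrow> nat list rel) \<Rightarrow>
    nat \<times> nat \<Rightarrow> state \<Rightarrow> state" where
  "step n p optim P x s = (case x of (j, i) \<Rightarrow>
     s(j := (s j)(i := Some (if optim j then opt_choice n p (P j) s j i
                                       else pess_choice n p (P j) s j i))))"

definition csam_state :: "nat \<Rightarrow> nat \<Rightarrow> (nat \<times> nat) list \<Rightarrow> (nat \<Rightarrow> bool) \<Rightarrow>
    (nat \<Rightarrow> nat list rel) \<Rightarrow> state" where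
  "csam_state n p Ord optim P = fold (step n p optim P) Ord (\<lambda>_ _. None)"

definition csam :: "nat \<Rightarrow> nat \<Rightarrow> (nat \<times> nat) list \<Rightarrow> (nat \<Rightarrow> bool) \<Rightarrow>
    (nat \<Rightarrow> nat list rel) \<Rightarrow> nat \<Rightarrow> nat list" where
  "csam n p Ord optim P j = map (\<lambda>i. the (csam_state n p Ord optim P j i)) [0..<p]"

text \<open>Position (0-based round index) of an element in Ord.\<close>
definition pos :: "(nat \<times> nat) list \<Rightarrow> nat \<times> nat \<Rightarrow> nat" where
  "pos Ord x = (LEAST t. t < length Ord \<and> Ord ! t = x)"

text \<open>O_j(l), for l = 1..p: the l-th category agent j chooses from.\<close>
definition Oj :: "(nat \<times> nat) list \<Rightarrow> nat \<Rightarrow> nat \<Rightarrow> nat" where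
  "Oj Ord j l = map snd (filter (\<lambda>x. fst x = j) Ord) ! (l - 1)"

definition kk :: "nat \<Rightarrow> (nat \<times> nat) list \<Rightarrow> nat \<Rightarrow> nat \<Rightarrow> nat" where
  "kk n Ord j i = n - card {a. \<exists>t < pos Ord (j, i). Ord ! t = (a, i)}"

definition Kj :: "nat \<Rightarrow> (nat \<times> nat) list \<Rightarrow> nat \<Rightarrow> nat" where
  "Kj p Ord j = (LEAST K. 1 \<le> K \<and> K \<le> p \<and>
     (\<forall>l. K < l \<and> l \<le> p \<longrightarrow>
        \<not> (\<exists>t. pos Ord (j, Oj Ord j K) < t \<and> t < pos Ord (j, Oj Ord j l) \<and> snd (Ord ! t) = Oj Ord j l)))"

definition is_allocation :: "nat \<Rightarrow> nat \<Rightarrow> (nat \<Rightarrow> nat list) \<Rightarrow> bool" where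
  "is_allocation n p A \<longleftrightarrow> (\<forall>j<n. A j \<in> bundles n p) \<and>
     (\<forall>i<p. bij_betw (\<lambda>j. A j ! i) {0..<n} {0..<n})"

end

theory Submission imports Defs "HOL-Library.FuncSet" begin

locale cs =
  fixes n p :: nat and Ord :: "(nat \<times> nat) list"
  assumes n1: "n \<ge> 1" and p1: "p \<ge> 1" and vo: "valid_order n p Ord"
begin

abbreviation "N \<equiv> length Ord"

lemma dist: "distinct Ord" and setO: "set Ord = {0..<n} \<times> {0..<p}"
  using vo unfolding valid_order_def by auto

lemma N_eq: "N = n * p"
proof -
  have "N = card (set Ord)" using dist by (simp add: distinct_card)
  also have "\<dots> = n * p" using setO by (simp add: card_cartesian_product)
  finally show ?thesis .
qed

lemma pos_nth: "t < N \<Longrightarrow> pos Ord (Ord ! t) = t"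
  unfolding pos_def
  by (rule Least_equality) (use dist nth_eq_iff_index_eq in auto)

lemma in_set_mem: "a < n \<Longrightarrow> i < p \<Longrightarrow> (a, i) \<in> set Ord"
  using setO by auto

lemma pos_lt: "x \<in> set Ord \<Longrightarrow> pos Ord x < N \<and> Ord ! pos Ord x = x"
proof -
  assume "x \<in> set Ord"
  then obtain t where t: "t < N" "Ord ! t = x" by (auto simp: in_set_conv_nth)
  thus ?thesis using pos_nth[of t] by auto
qed

lemma nth_mem': "t < N \<Longrightarrow> fst (Ord ! t) < n \<and> snd (Ord ! t) < p"
  using setO nth_mem[of t Ord] by (auto simp: mem_Times_iff)

definition ps :: "nat \<Rightarrow> nat \<Rightarrow> nat" where "ps a i = pos Ord (a, i)"

lemma ps_lt: "a < n \<Longrightarrow> i < p \<Longrightarrow> ps a i < N \<and> Ord ! ps a i = (a, i)"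
  unfolding ps_def using pos_lt in_set_mem by blast

lemma ps_inj: "a < n \<Longrightarrow> i < p \<Longrightarrow> b < n \<Longrightarrow> l < p \<Longrightarrow> ps a i = ps b l \<Longrightarrow> a = b \<and> i = l"
  using ps_lt by (metis prod.inject)

lemma ps_of_nth: "t < N \<Longrightarrow> Ord ! t = (a, i) \<Longrightarrow> ps a i = t"
  unfolding ps_def using pos_nth by metis

definition cnt :: "nat \<Rightarrow> nat \<Rightarrow> nat" where "cnt i t = card {a. a < n \<and> ps a i < t}"

definition rr :: "nat \<Rightarrow> nat \<Rightarrow> nat" where "rr j i = cnt i (ps j i)"

lemma cnt_le: "cnt i t \<le> n"
  unfolding cnt_def by (rule order.trans[OF card_mono[of "{..<n}"]]) auto

lemma cnt_mono: "t \<le> t' \<Longrightarrow> cnt i t \<le> cnt i t'"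
  unfolding cnt_def by (rule card_mono) auto

lemma rr_lt_cnt: "a < n \<Longrightarrow> ps a i < t \<Longrightarrow> rr a i < cnt i t"
  unfolding rr_def cnt_def
  by (rule psubset_card_mono) auto

lemma rr_img: "i < p \<Longrightarrow> (\<lambda>a. rr a i) ` {a. a < n \<and> ps a i < t} = {..<cnt i t}"
  and rr_inj: "i < p \<Longrightarrow> inj_on (\<lambda>a. rr a i) {a. a < n \<and> ps a i < t}"
proof -
  assume i: "i < p"
  show inj: "inj_on (\<lambda>a. rr a i) {a. a < n \<and> ps a i < t}"
  proof (rule inj_onI)
    fix a b assume a: "a \<in> {a. a < n \<and> ps a i < t}" and b: "b \<in> {a. a < n \<and> ps a i < t}"
      and e: "rr a i = rr b i"
    show "a = b"
    proof (rule ccontr)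
      assume "a \<noteq> b"
      then have "ps a i \<noteq> ps b i" using ps_inj a b i by auto
      then have "ps a i < ps b i \<or> ps b i < ps a i" by auto
      then show False using rr_lt_cnt[of a i "ps b i"] rr_lt_cnt[of b i "ps a i"] a b e
        unfolding rr_def[of b] rr_def[of a] by auto
    qed
  qed
  have sub: "(\<lambda>a. rr a i) ` {a. a < n \<and> ps a i < t} \<subseteq> {..<cnt i t}"
    using rr_lt_cnt by auto
  have "card ((\<lambda>a. rr a i) ` {a. a < n \<and> ps a i < t}) = cnt i t"
    using card_image[OF inj] unfolding cnt_def by simp
  then show "(\<lambda>a. rr a i) ` {a. a < n \<and> ps a i < t} = {..<cnt i t}"
    using sub by (intro card_subset_eq) auto
qed

lemma rr_lt: "j < n \<Longrightarrow> rr j i < n"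
  using rr_lt_cnt[of j i "Suc (ps j i)"] cnt_le[of i "Suc (ps j i)"] by auto

lemma cnt_N: "i < p \<Longrightarrow> cnt i N = n"
proof -
  assume i: "i < p"
  have "{a. a < n \<and> ps a i < N} = {..<n}" using ps_lt i by auto
  thus ?thesis unfolding cnt_def by simp
qed

lemma rr_bij: "i < p \<Longrightarrow> bij_betw (\<lambda>a. rr a i) {0..<n} {0..<n}"
proof -
  assume i: "i < p"
  have e: "{a. a < n \<and> ps a i < N} = {0..<n}" using ps_lt i by auto
  show ?thesis unfolding bij_betw_def using rr_img[OF i, of N] rr_inj[OF i, of N] cnt_N[OF i] e
    by (auto simp: lessThan_atLeast0)
qed


definition st :: "nat \<Rightarrow> state" where
  "st t = (\<lambda>a l. if a < n \<and> l < p \<and> ps a l < t then Some (rr a l) else None)"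

definition rv :: "nat \<Rightarrow> nat list" where "rv j = map (rr j) [0..<p]"

lemma rv_bundle: "j < n \<Longrightarrow> rv j \<in> bundles n p"
  unfolding rv_def bundles_def using rr_lt by auto

lemma rv_nth[simp]: "l < p \<Longrightarrow> rv j ! l = rr j l"
  unfolding rv_def by simp

lemma length_rv[simp]: "length (rv j) = p" unfolding rv_def by simp

lemma remaining_st: "i < p \<Longrightarrow> remaining n (st t) i = {d. cnt i t \<le> d \<and> d < n}"
proof -
  assume i: "i < p"
  have "(\<exists>a. st t a i = Some d) \<longleftrightarrow> d < cnt i t" for d
  proof -
    have "(\<exists>a. st t a i = Some d) \<longleftrightarrow> d \<in> (\<lambda>a. rr a i) ` {a. a < n \<and> ps a i < t}"
      unfolding st_def using i by (auto split: if_splits)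
    thus ?thesis using rr_img[OF i] by auto
  qed
  thus ?thesis unfolding remaining_def by auto
qed

definition avail :: "nat \<Rightarrow> nat \<Rightarrow> nat list set" where
  "avail j t = {b \<in> bundles n p. \<forall>l<p. if ps j l < t then b ! l = rr j l else cnt l t \<le> b ! l}"

lemma available_st: "j < n \<Longrightarrow> available n p (st t) j = avail j t"
proof -
  assume j: "j < n"
  show ?thesis
    unfolding available_def avail_def
  proof (intro Collect_cong conj_cong refl)
    fix b assume b: "b \<in> bundles n p"
    show "(\<forall>l<p. case st t j l of None \<Rightarrow> b ! l \<in> remaining n (st t) l | Some d \<Rightarrow> b ! l = d) =
        (\<forall>l<p. if ps j l < t then b ! l = rr j l else cnt l t \<le> b ! l)"
      using b j remaining_st unfolding st_def bundles_def by auto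
  qed
qed

lemma rv_avail: "j < n \<Longrightarrow> rv j \<in> avail j t"
  unfolding avail_def using rv_bundle 
  by (auto simp: rr_def intro: cnt_mono)

lemma avail_own: "j < n \<Longrightarrow> i < p \<Longrightarrow> b \<in> avail j (ps j i) \<Longrightarrow> rr j i \<le> b ! i"
  unfolding avail_def rr_def by auto

lemma st_step:
  assumes t: "t < N" and o: "Ord ! t = (j, i)"
  shows "st (Suc t) = (st t)(j := (st t j)(i := Some (rr j i)))"
proof -
  have ji: "j < n" "i < p" using nth_mem'[OF t] o by auto
  have pj: "ps j i = t" using ps_of_nth[OF t o] .
  show ?thesis
  proof (intro ext)
    fix a l
    show "st (Suc t) a l = ((st t)(j := (st t j)(i := Some (rr j i)))) a l"
    proof (cases "a = j \<and> l = i")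
      case True thus ?thesis using ji pj unfolding st_def by auto
    next
      case False
      have "a < n \<Longrightarrow> l < p \<Longrightarrow> ps a l \<noteq> t" using ps_inj[of a l j i] ji pj False by auto
      thus ?thesis using False unfolding st_def by (auto simp: less_Suc_eq)
    qed
  qed
qed

lemma csam_eq:
  assumes ch: "\<And>t j i. t < N \<Longrightarrow> Ord ! t = (j, i) \<Longrightarrow>
      (if optim j then opt_choice n p (P j) (st t) j i else pess_choice n p (P j) (st t) j i) = rr j i"
  shows "j < n \<Longrightarrow> csam n p Ord optim P j = rv j"
proof -
  have fo: "t \<le> N \<Longrightarrow> fold (step n p optim P) (take t Ord) (\<lambda>_ _. None) = st t" for t
  proof (induction t)
    case 0 thus ?case unfolding st_def by auto
  next
    case (Suc t)
    then have t: "t < N" by simp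
    obtain j i where o: "Ord ! t = (j, i)" by (cases "Ord ! t") auto
    have "take (Suc t) Ord = take t Ord @ [Ord ! t]" using t by (simp add: take_Suc_conv_app_nth)
    then have "fold (step n p optim P) (take (Suc t) Ord) (\<lambda>_ _. None) = step n p optim P (j, i) (st t)"
      using Suc o by simp
    also have "\<dots> = st (Suc t)" unfolding step_def using ch[OF t o] st_step[OF t o] by simp
    finally show ?case .
  qed
  assume j: "j < n"
  have "csam_state n p Ord optim P = st N" unfolding csam_state_def using fo[of N] by simp
  thus ?thesis unfolding csam_def rv_def st_def using j ps_lt by auto
qed


definition F :: "nat \<Rightarrow> (nat \<times> nat) list" where "F j = filter (\<lambda>x. fst x = j) Ord"

lemma set_F: "j < n \<Longrightarrow> set (F j) = {j} \<times> {0..<p}"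
  unfolding F_def using setO by auto

lemma length_F: "j < n \<Longrightarrow> length (F j) = p"
proof -
  assume j: "j < n"
  have "length (F j) = card (set (F j))" using dist unfolding F_def by (metis distinct_card distinct_filter)
  thus ?thesis using set_F[OF j] by (simp add: card_cartesian_product)
qed

lemma map_pos_F: "map (pos Ord) (F j) = filter (\<lambda>t. fst (Ord ! t) = j) [0..<N]"
proof -
  have "F j = map (nth Ord) (filter ((\<lambda>x. fst x = j) \<circ> nth Ord) [0..<N])"
    unfolding F_def by (metis filter_map map_nth)
  hence "map (pos Ord) (F j) = map (pos Ord \<circ> nth Ord) (filter ((\<lambda>x. fst x = j) \<circ> nth Ord) [0..<N])"
    by simp
  also have "\<dots> = filter ((\<lambda>x. fst x = j) \<circ> nth Ord) [0..<N]"
    by (rule map_idI) (auto simp: pos_nth)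
  finally show ?thesis by (simp add: comp_def)
qed

lemma sorted_F: "sorted_wrt (<) (map (pos Ord) (F j))"
  unfolding map_pos_F by (rule sorted_wrt_filter) simp

lemma F_nth: "j < n \<Longrightarrow> k < p \<Longrightarrow> F j ! k = (j, Oj Ord j (Suc k))"
proof -
  assume j: "j < n" and k: "k < p"
  have "F j ! k \<in> set (F j)" using k length_F[OF j] by simp
  hence "fst (F j ! k) = j" using set_F[OF j] by auto
  moreover have "Oj Ord j (Suc k) = snd (F j ! k)"
    unfolding Oj_def F_def[symmetric] using k length_F[OF j] by simp
  ultimately show ?thesis by (metis prod.collapse)
qed

lemma Oj_lt: "j < n \<Longrightarrow> 1 \<le> l \<Longrightarrow> l \<le> p \<Longrightarrow> Oj Ord j l < p"
proof -
  assume j: "j < n" and l: "1 \<le> l" "l \<le> p"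
  have "F j ! (l - 1) \<in> set (F j)" using l length_F[OF j] by simp
  thus ?thesis using F_nth[OF j, of "l - 1"] set_F[OF j] l by auto
qed

lemma ps_Oj: "j < n \<Longrightarrow> 1 \<le> l \<Longrightarrow> l \<le> p \<Longrightarrow> ps j (Oj Ord j l) = map (pos Ord) (F j) ! (l - 1)"
proof -
  assume j: "j < n" and l: "1 \<le> l" "l \<le> p"
  have "map (pos Ord) (F j) ! (l - 1) = pos Ord (F j ! (l - 1))" using l length_F[OF j] by simp
  also have "\<dots> = ps j (Oj Ord j l)" using F_nth[OF j, of "l - 1"] l unfolding ps_def by simp
  finally show ?thesis by simp
qed

lemma Oj_mono: "j < n \<Longrightarrow> 1 \<le> l \<Longrightarrow> l < l' \<Longrightarrow> l' \<le> p \<Longrightarrow> ps j (Oj Ord j l) < ps j (Oj Ord j l')"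
  using ps_Oj sorted_wrt_nth_less[OF sorted_F] length_F by (simp add: ps_Oj)

lemma Oj_mono_iff: "j < n \<Longrightarrow> 1 \<le> l \<Longrightarrow> l \<le> p \<Longrightarrow> 1 \<le> l' \<Longrightarrow> l' \<le> p \<Longrightarrow>
   ps j (Oj Ord j l) < ps j (Oj Ord j l') \<longleftrightarrow> l < l'"
  using Oj_mono by (metis less_asym linorder_neqE_nat)

lemma Oj_bij: "j < n \<Longrightarrow> bij_betw (Oj Ord j) {1..p} {0..<p}"
proof -
  assume j: "j < n"
  have inj: "inj_on (Oj Ord j) {1..p}"
  proof (rule inj_onI)
    fix l l' assume "l \<in> {1..p}" "l' \<in> {1..p}" "Oj Ord j l = Oj Ord j l'"
    thus "l = l'" using Oj_mono[OF j, of l l'] Oj_mono[OF j, of l' l] by (metis atLeastAtMost_iff less_irrefl linorder_neqE_nat)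
  qed
  have sub: "Oj Ord j ` {1..p} \<subseteq> {0..<p}" using Oj_lt[OF j] by auto
  have "card (Oj Ord j ` {1..p}) = p" using card_image[OF inj] by simp
  hence "Oj Ord j ` {1..p} = {0..<p}" using sub by (intro card_subset_eq) auto
  thus ?thesis using inj unfolding bij_betw_def by simp
qed

lemma Oj_surj: "j < n \<Longrightarrow> i < p \<Longrightarrow> \<exists>l. 1 \<le> l \<and> l \<le> p \<and> Oj Ord j l = i"
  using Oj_bij unfolding bij_betw_def by (metis atLeastAtMost_iff atLeastLessThan_iff imageE le0)

end
context cs begin

definition KK :: "nat \<Rightarrow> nat" where "KK j = Kj p Ord j"
definition tK :: "nat \<Rightarrow> nat" where "tK j = ps j (Oj Ord j (KK j))"

abbreviation condK where "condK j K \<equiv> 1 \<le> K \<and> K \<le> p \<and>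
     (\<forall>l. K < l \<and> l \<le> p \<longrightarrow>
        \<not> (\<exists>t. pos Ord (j, Oj Ord j K) < t \<and> t < pos Ord (j, Oj Ord j l) \<and> snd (Ord ! t) = Oj Ord j l))"

lemma KK_cond: "condK j (KK j)"
  unfolding KK_def Kj_def by (rule LeastI[of _ p]) (use p1 in auto)

lemma KK_min: "K < KK j \<Longrightarrow> \<not> condK j K"
  unfolding KK_def Kj_def by (rule not_less_Least)

lemma KK_range: "1 \<le> KK j \<and> KK j \<le> p" using KK_cond by blast

lemma K1: assumes j: "j < n" and l: "l < p" and lt: "tK j < ps j l" and t: "tK j < t" "t < ps j l"
  shows "snd (Ord ! t) \<noteq> l"
proof -
  obtain l' where l': "1 \<le> l'" "l' \<le> p" "Oj Ord j l' = l" using Oj_surj[OF j l] by blast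
  have "KK j < l'" using Oj_mono_iff[OF j, of "KK j" l'] lt l' KK_range unfolding tK_def by auto
  then have "\<not> (\<exists>t. pos Ord (j, Oj Ord j (KK j)) < t \<and> t < pos Ord (j, Oj Ord j l') \<and> snd (Ord ! t) = Oj Ord j l')"
    using KK_cond[of j] l'(2) by simp
  thus ?thesis using l'(3) t unfolding tK_def ps_def by auto
qed

lemma K2: assumes j: "j < n" and l0: "l0 < p" and lt: "ps j l0 < tK j"
  shows "\<exists>l<p. ps j l0 < ps j l \<and> (\<exists>t. ps j l0 < t \<and> t < ps j l \<and> snd (Ord ! t) = l)"
proof -
  obtain k where k: "1 \<le> k" "k \<le> p" "Oj Ord j k = l0" using Oj_surj[OF j l0] by blast
  have kK: "k < KK j" using Oj_mono_iff[OF j, of k "KK j"] lt k KK_range unfolding tK_def by auto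
  hence "\<not> condK j k" by (rule KK_min)
  then have "\<not> (\<forall>l. k < l \<and> l \<le> p \<longrightarrow>
        \<not> (\<exists>t. pos Ord (j, Oj Ord j k) < t \<and> t < pos Ord (j, Oj Ord j l) \<and> snd (Ord ! t) = Oj Ord j l))"
    using k kK KK_range[of j] by simp
  then obtain l where l: "k < l" "l \<le> p" and
    ex: "\<exists>t. pos Ord (j, Oj Ord j k) < t \<and> t < pos Ord (j, Oj Ord j l) \<and> snd (Ord ! t) = Oj Ord j l"
    by blast
  have "Oj Ord j l < p" using Oj_lt[OF j] l k by auto
  moreover have "ps j l0 < ps j (Oj Ord j l)" using Oj_mono[OF j, of k l] k l by auto
  ultimately show ?thesis using ex k unfolding ps_def by blast
qed

lemma tK_cat: "j < n \<Longrightarrow> Oj Ord j (KK j) < p" using Oj_lt KK_range by blast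


lemma card_lists_prod:
  assumes fin: "\<And>l. l < p' \<Longrightarrow> finite (S l)"
  shows "card {b. length b = p' \<and> (\<forall>l<p'. b ! l \<in> S l)} = (\<Prod>l<p'. card (S l))"
proof -
  let ?L = "{b. length b = p' \<and> (\<forall>l<p'. b ! l \<in> S l)}"
  have bij: "bij_betw (\<lambda>b. restrict (nth b) {..<p'}) ?L (PiE {..<p'} S)"
  proof (rule bij_betw_byWitness[where f' = "\<lambda>g. map g [0..<p']"])
    show "\<forall>a\<in>?L. map (restrict ((!) a) {..<p'}) [0..<p'] = a"
      by (auto intro: nth_equalityI)
    show "\<forall>a'\<in>PiE {..<p'} S. restrict ((!) (map a' [0..<p'])) {..<p'} = a'"
      by (auto simp: PiE_def extensional_def restrict_def fun_eq_iff)
    show "(\<lambda>b. restrict ((!) b) {..<p'}) ` ?L \<subseteq> PiE {..<p'} S" 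
    proof
      fix g assume "g \<in> (\<lambda>b. restrict ((!) b) {..<p'}) ` ?L"
      then obtain b where "b \<in> ?L" "g = restrict ((!) b) {..<p'}" by blast
      thus "g \<in> PiE {..<p'} S" by (simp add: restrict_PiE_iff)
    qed
    show "(\<lambda>g. map g [0..<p']) ` PiE {..<p'} S \<subseteq> ?L" by (auto simp: PiE_def Pi_def)
  qed
  have "card ?L = card (PiE {..<p'} S)" using bij_betw_same_card[OF bij] .
  also have "\<dots> = (\<Prod>l<p'. card (S l))" by (rule card_PiE) simp
  finally show ?thesis .
qed

lemma finite_bundles: "finite (bundles n' p')"
proof -
  have "bundles n' p' \<subseteq> {xs. set xs \<subseteq> {..<n'} \<and> length xs = p'}"
    unfolding bundles_def by (auto simp: in_set_conv_nth)
  thus ?thesis by (rule finite_subset) (simp add: finite_lists_length_eq)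
qed

lemma card_bundles: "card (bundles n p) = n ^ p"
proof -
  have "bundles n p = {b. length b = p \<and> (\<forall>l<p. b ! l \<in> {..<n})}" unfolding bundles_def by auto
  thus ?thesis using card_lists_prod[of p "\<lambda>_. {..<n}"] by simp
qed

end

locale cs2 = cs +
  fixes f :: "nat list \<Rightarrow> nat" and M :: nat
  assumes finj: "inj_on f (bundles n p)" and fM: "\<And>b. b \<in> bundles n p \<Longrightarrow> f b < M"
begin

definition kf :: "(nat list \<Rightarrow> nat) \<Rightarrow> nat list \<Rightarrow> nat" where "kf k b = k b * M + f b"

definition Rel :: "(nat list \<Rightarrow> nat) \<Rightarrow> nat list rel" where
  "Rel k = {(a, b). a \<in> bundles n p \<and> b \<in> bundles n p \<and> kf k a \<le> kf k b}"

lemma kf_less: "a \<in> bundles n p \<Longrightarrow> b \<in> bundles n p \<Longrightarrow> k a < k b \<Longrightarrow> kf k a < kf k b"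
proof -
  assume a: "a \<in> bundles n p" and b: "b \<in> bundles n p" and lt: "k a < k b"
  have "kf k a < (k a + 1) * M" unfolding kf_def using fM[OF a] by simp
  also have "\<dots> \<le> k b * M" using lt by (intro mult_right_mono) auto
  also have "\<dots> \<le> kf k b" unfolding kf_def by simp
  finally show ?thesis .
qed

lemma kf_inj: "a \<in> bundles n p \<Longrightarrow> b \<in> bundles n p \<Longrightarrow> kf k a = kf k b \<Longrightarrow> a = b"
proof -
  assume a: "a \<in> bundles n p" and b: "b \<in> bundles n p" and e: "kf k a = kf k b"
  have "k a = k b" using kf_less[OF a b, of k] kf_less[OF b a, of k] e by (metis less_irrefl linorder_neqE_nat)
  hence "f a = f b" using e unfolding kf_def by simp
  thus ?thesis using finj a b by (simp add: inj_on_eq_iff)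
qed

lemma pref_Rel: "is_pref n p (Rel k)"
  unfolding is_pref_def linear_order_on_def partial_order_on_def preorder_on_def
    refl_on_def trans_def antisym_def total_on_def Rel_def
  using kf_inj by auto

lemma rank_Rel: "rank n p (Rel k) b = card {a \<in> bundles n p. kf k a \<le> kf k b}" if "b \<in> bundles n p"
  unfolding rank_def Rel_def using that by (intro arg_cong[where f = card]) auto

lemma top_eq:
  assumes V: "V \<subseteq> bundles n p" and m: "m \<in> V" and mn: "\<forall>b\<in>V. kf k m \<le> kf k b"
  shows "(THE b. b \<in> V \<and> (\<forall>b'\<in>V. (b, b') \<in> Rel k)) = m"
proof (rule the_equality)
  show "m \<in> V \<and> (\<forall>b'\<in>V. (m, b') \<in> Rel k)" using m mn V unfolding Rel_def by auto
  fix b assume b: "b \<in> V \<and> (\<forall>b'\<in>V. (b, b') \<in> Rel k)"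
  hence "kf k b \<le> kf k m" using m unfolding Rel_def by auto
  hence "kf k b = kf k m" using mn b by (meson antisym)
  thus "b = m" using kf_inj V b m by auto
qed

lemma exists_min: "finite V \<Longrightarrow> V \<noteq> {} \<Longrightarrow> \<exists>m\<in>V. \<forall>b\<in>V. kf k m \<le> kf k b"
proof -
  assume "finite V" "V \<noteq> {}"
  then have "Min (kf k ` V) \<in> kf k ` V" by simp
  then obtain m where "m \<in> V" "kf k m = Min (kf k ` V)" by auto
  thus ?thesis using \<open>finite V\<close> by (metis Min_le finite_imageI image_eqI)
qed

lemma exists_max: "finite V \<Longrightarrow> V \<noteq> {} \<Longrightarrow> \<exists>m\<in>V. \<forall>b\<in>V. kf k b \<le> kf k m"
proof -
  assume "finite V" "V \<noteq> {}"
  then have "Max (kf k ` V) \<in> kf k ` V" by simp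
  then obtain m where "m \<in> V" "kf k m = Max (kf k ` V)" by auto
  thus ?thesis using \<open>finite V\<close> by (metis Max_ge finite_imageI image_eqI)
qed


lemma cnt_const: assumes "t \<le> t'" and "\<And>s. t \<le> s \<Longrightarrow> s < t' \<Longrightarrow> snd (Ord ! s) \<noteq> l" and "l < p"
  shows "cnt l t = cnt l t'"
proof -
  have "{a. a < n \<and> ps a l < t} = {a. a < n \<and> ps a l < t'}"
  proof (intro Collect_cong iffI)
    fix a assume "a < n \<and> ps a l < t'"
    moreover have "a < n \<Longrightarrow> snd (Ord ! ps a l) = l" using ps_lt assms(3) by auto
    ultimately show "a < n \<and> ps a l < t" using assms(2)[of "ps a l"] by (meson not_le)
  qed (use assms(1) in auto)
  thus ?thesis unfolding cnt_def by simp
qed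

lemma cnt_step: assumes "s < N" "snd (Ord ! s) = l" shows "cnt l s < cnt l (Suc s)"
proof -
  obtain a where a: "Ord ! s = (a, l)" using assms by (cases "Ord ! s") auto
  have al: "a < n" "l < p" using nth_mem'[OF assms(1)] a by auto
  have "ps a l = s" using ps_of_nth[OF assms(1) a] .
  thus ?thesis unfolding cnt_def using al by (intro psubset_card_mono) auto
qed

definition Aset :: "nat \<Rightarrow> nat list set" where
  "Aset j = {b \<in> bundles n p. \<forall>l<p. if ps j l < tK j then b ! l = rr j l else rr j l \<le> b ! l}"

definition gt :: "nat \<Rightarrow> nat list \<Rightarrow> nat" where "gt j b = card {l. l < p \<and> rr j l < b ! l}"

definition okey :: "nat \<Rightarrow> nat list \<Rightarrow> nat list \<Rightarrow> nat list \<Rightarrow> nat list \<Rightarrow> nat" where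
  "okey j t1 t2 sc b = (if b = t1 then 0 else if b = t2 then 1 else if b \<notin> Aset j then 2 + gt j b
     else if b = rv j then p + 3 else if b = sc then p + 4 else p + 5)"

lemma gt_le: "gt j b \<le> p"
  unfolding gt_def by (rule order.trans[OF card_mono[of "{..<p}"]]) auto

lemma avail_sub: "avail j t \<subseteq> bundles n p" unfolding avail_def by auto

lemma opt_ok:
  assumes t: "t < N" and o: "Ord ! t = (j, i)"
    and t1A: "t1 \<notin> Aset j" and t2A: "t2 \<notin> Aset j"
    and oc1: "t1 \<in> avail j t \<Longrightarrow> t1 ! i = rr j i"
    and oc2: "t2 \<in> avail j t \<Longrightarrow> t2 \<noteq> t1 \<Longrightarrow> t2 ! i = rr j i \<or> t1 \<in> avail j t"
  shows "opt_choice n p (Rel (okey j t1 t2 sc)) (st t) j i = rr j i"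
proof -
  let ?k = "okey j t1 t2 sc"
  have ji: "j < n" "i < p" using nth_mem'[OF t] o by auto
  have pj: "ps j i = t" using ps_of_nth[OF t o] .
  let ?V = "avail j t"
  have fin: "finite ?V" using avail_sub finite_bundles by (rule finite_subset)
  have rvV: "rv j \<in> ?V" using rv_avail[OF ji(1)] .
  obtain m where m: "m \<in> ?V" and mmin: "\<forall>b\<in>?V. kf ?k m \<le> kf ?k b"
    using exists_min[OF fin] rvV by blast
  have mB: "m \<in> bundles n p" using m avail_sub by auto
  have keymin: "b \<in> ?V \<Longrightarrow> ?k m \<le> ?k b" for b
    using kf_less[OF _ mB, of b ?k] mmin avail_sub by (meson in_mono not_le)
  have the: "opt_choice n p (Rel ?k) (st t) j i = m ! i"
    unfolding opt_choice_def available_st[OF ji(1)] using top_eq[OF avail_sub m mmin] by simp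
  have "m ! i = rr j i"
  proof (cases "tK j \<le> t")
    case True
    have VA: "?V \<subseteq> Aset j"
    proof
      fix b assume b: "b \<in> ?V"
      have "\<forall>l<p. if ps j l < tK j then b ! l = rr j l else rr j l \<le> b ! l"
      proof (intro allI impI)
        fix l assume l: "l < p"
        show "if ps j l < tK j then b ! l = rr j l else rr j l \<le> b ! l"
        proof (cases "ps j l < t")
          case True thus ?thesis using b l unfolding avail_def by auto
        next
          case False
          hence c: "cnt l t \<le> b ! l" using b l unfolding avail_def by auto
          have "cnt l t = rr j l"
          proof (cases "ps j l = t")
            case True thus ?thesis using pj ps_inj[of j l j i] ji l unfolding rr_def by auto
          next
            case False
            hence gtl: "t < ps j l" using \<open>\<not> ps j l < t\<close> by auto
            show ?thesis unfolding rr_def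
            proof (rule cnt_const)
              fix s assume s: "t \<le> s" "s < ps j l"
              show "snd (Ord ! s) \<noteq> l"
              proof (cases "s = tK j")
                case True
                have "snd (Ord ! tK j) = Oj Ord j (KK j)" using ps_lt[OF ji(1) tK_cat[OF ji(1)]] unfolding tK_def by simp
                moreover have "Oj Ord j (KK j) \<noteq> l" using gtl True s \<open>tK j \<le> t\<close> unfolding tK_def by auto
                ultimately show ?thesis using True by simp
              next
                case False
                thus ?thesis using K1[OF ji(1) l] s \<open>tK j \<le> t\<close> gtl by auto
              qed
            qed (use gtl l in auto)
          qed
          thus ?thesis using c False \<open>tK j \<le> t\<close> by auto
        qed
      qed
      thus "b \<in> Aset j" using b avail_sub unfolding Aset_def by auto
    qed
    have rvA: "rv j \<in> Aset j" using VA rvV by auto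
    have mA: "m \<in> Aset j" using VA m by auto
    have "m \<noteq> t1" "m \<noteq> t2" using mA t1A t2A by auto
    have "rv j \<noteq> t1" "rv j \<noteq> t2" using rvA t1A t2A by auto
    hence "?k (rv j) = p + 3" using rvA unfolding okey_def by simp
    moreover have "m \<noteq> rv j \<Longrightarrow> ?k m \<ge> p + 4" using mA \<open>m \<noteq> t1\<close> \<open>m \<noteq> t2\<close> unfolding okey_def by auto
    ultimately have "m = rv j" using keymin[OF rvV] by fastforce
    thus ?thesis using ji by simp
  next
    case False
    hence "ps j i < tK j" using pj by simp
    then obtain l' where l': "l' < p" "ps j i < ps j l'" and
      ex: "\<exists>s. ps j i < s \<and> s < ps j l' \<and> snd (Ord ! s) = l'"
      using K2[OF ji] by blast
    obtain s where s: "t < s" "s < ps j l'" "snd (Ord ! s) = l'" using ex pj by auto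
    have sN: "s < N" using s ps_lt[OF ji(1) l'(1)] by auto
    have clt: "cnt l' t < rr j l'"
    proof -
      have "cnt l' t \<le> cnt l' s" using s by (intro cnt_mono) auto
      also have "\<dots> < cnt l' (Suc s)" using cnt_step[OF sN s(3)] .
      also have "\<dots> \<le> rr j l'" unfolding rr_def using s by (intro cnt_mono) auto
      finally show ?thesis .
    qed
    define Lb where "Lb = (rv j)[l' := cnt l' t]"
    have Lbn: "l < p \<Longrightarrow> Lb ! l = (if l = l' then cnt l' t else rr j l)" for l
      unfolding Lb_def using l' by auto
    have LbB: "Lb \<in> bundles n p"
      unfolding bundles_def using Lbn rr_lt[OF ji(1)] clt unfolding Lb_def by (auto simp: nth_list_update intro: less_trans)
    have LbV: "Lb \<in> ?V"
    proof -
      have "\<forall>l<p. if ps j l < t then Lb ! l = rr j l else cnt l t \<le> Lb ! l"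
      proof (intro allI impI)
        fix l assume l: "l < p"
        show "if ps j l < t then Lb ! l = rr j l else cnt l t \<le> Lb ! l"
        proof (cases "l = l'")
          case True thus ?thesis using l' pj Lbn l by auto
        next
          case False
          have "cnt l t \<le> rr j l" if "\<not> ps j l < t" unfolding rr_def using that by (intro cnt_mono) auto
          thus ?thesis using Lbn[OF l] False by auto
        qed
      qed
      thus ?thesis using LbB unfolding avail_def by auto
    qed
    have LbA: "Lb \<notin> Aset j"
    proof
      assume "Lb \<in> Aset j"
      hence "if ps j l' < tK j then Lb ! l' = rr j l' else rr j l' \<le> Lb ! l'" using l' unfolding Aset_def by auto
      thus False using Lbn[OF l'(1)] clt by (auto split: if_splits)
    qed
    have "{l. l < p \<and> rr j l < Lb ! l} = {}"
    proof -
      have "l < p \<Longrightarrow> Lb ! l \<le> rr j l" for l using Lbn[of l] clt by auto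
      thus ?thesis by (auto simp: not_less[symmetric])
    qed
    hence "gt j Lb = 0" unfolding gt_def by simp
    hence "?k Lb \<le> 2" using LbA unfolding okey_def by auto
    hence km: "?k m \<le> 2" using keymin[OF LbV] by simp
    show ?thesis
    proof (rule ccontr)
      assume ne: "m ! i \<noteq> rr j i"
      have "rr j i \<le> m ! i" using avail_own[OF ji] m pj by simp
      hence lt: "rr j i < m ! i" using ne by simp
      show False
      proof (cases "m = t1")
        case True thus False using oc1 m ne by simp
      next
        case F1: False
        show False
        proof (cases "m = t2")
          case True
          hence "t1 \<in> ?V" using oc2 m ne F1 by auto
          moreover have "?k t1 = 0" unfolding okey_def by simp
          moreover have "?k m = 1" using True F1 unfolding okey_def by simp
          ultimately show False using keymin by fastforce
        next
          case False
          have "gt j m \<ge> 1"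
          proof -
            have "i \<in> {l. l < p \<and> rr j l < m ! l}" using ji lt by auto
            hence "{l. l < p \<and> rr j l < m ! l} \<noteq> {}" by auto
            thus ?thesis unfolding gt_def by (simp add: Suc_leI card_gt_0_iff)
          qed
          hence "?k m \<ge> 3" using F1 False unfolding okey_def by auto
          thus False using km by simp
        qed
      qed
    qed
  qed
  thus ?thesis using the by simp
qed


lemma kk_eq: assumes "j < n" "i < p" shows "kk n Ord j i = n - rr j i"
proof -
  have "{a. \<exists>t<pos Ord (j, i). Ord ! t = (a, i)} = {a. a < n \<and> ps a i < ps j i}"
  proof (intro Collect_cong iffI)
    fix a assume "\<exists>t<pos Ord (j, i). Ord ! t = (a, i)"
    then obtain t where t: "t < ps j i" "Ord ! t = (a, i)" unfolding ps_def by auto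
    have tN: "t < N" using t ps_lt assms by (meson less_trans)
    show "a < n \<and> ps a i < ps j i" using nth_mem'[OF tN] t ps_of_nth[OF tN t(2)] by auto
  next
    fix a assume "a < n \<and> ps a i < ps j i"
    thus "\<exists>t<pos Ord (j, i). Ord ! t = (a, i)" using ps_lt assms unfolding ps_def by auto
  qed
  thus ?thesis unfolding kk_def rr_def cnt_def ps_def by simp
qed

lemma Aset_sub: "Aset j \<subseteq> bundles n p" unfolding Aset_def by auto

lemma rv_Aset: "j < n \<Longrightarrow> rv j \<in> Aset j" unfolding Aset_def using rv_bundle by auto

lemma card_Aset: assumes j: "j < n"
  shows "card (Aset j) = (\<Prod>l\<in>{KK j..p}. kk n Ord j (Oj Ord j l))"
proof -
  define S where "S l = (if ps j l < tK j then {rr j l} else {rr j l..<n})" for l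
  have "Aset j = {b. length b = p \<and> (\<forall>l<p. b ! l \<in> S l)}"
    unfolding Aset_def bundles_def S_def using rr_lt[OF j] by (auto split: if_splits)
  hence "card (Aset j) = (\<Prod>l<p. card (S l))" using card_lists_prod[of p S] unfolding S_def by simp
  also have "\<dots> = (\<Prod>l<p. if \<not> ps j l < tK j then n - rr j l else 1)"
    unfolding S_def by (intro prod.cong) auto
  also have "\<dots> = (\<Prod>l\<in>{l\<in>{..<p}. \<not> ps j l < tK j}. n - rr j l)"
    by (rule prod.inter_filter[symmetric]) simp
  also have "{l\<in>{..<p}. \<not> ps j l < tK j} = Oj Ord j ` {KK j..p}"
  proof
    show "{l\<in>{..<p}. \<not> ps j l < tK j} \<subseteq> Oj Ord j ` {KK j..p}"
    proof
      fix i assume i: "i \<in> {l\<in>{..<p}. \<not> ps j l < tK j}"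
      obtain l where l: "1 \<le> l" "l \<le> p" "Oj Ord j l = i" using Oj_surj[OF j, of i] i by auto
      have "\<not> l < KK j" using Oj_mono[OF j, of l "KK j"] l i KK_range unfolding tK_def by auto
      thus "i \<in> Oj Ord j ` {KK j..p}" using l by auto
    qed
    show "Oj Ord j ` {KK j..p} \<subseteq> {l\<in>{..<p}. \<not> ps j l < tK j}"
    proof
      fix i assume "i \<in> Oj Ord j ` {KK j..p}"
      then obtain l where l: "KK j \<le> l" "l \<le> p" "i = Oj Ord j l" by auto
      have "i < p" using Oj_lt[OF j, of l] l KK_range[of j] by auto
      moreover have "\<not> ps j i < tK j"
        using Oj_mono[OF j, of "KK j" l] l KK_range[of j] unfolding tK_def by (cases "l = KK j") auto
      ultimately show "i \<in> {l\<in>{..<p}. \<not> ps j l < tK j}" by simp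
    qed
  qed
  also have "(\<Prod>l\<in>Oj Ord j ` {KK j..p}. n - rr j l) = (\<Prod>l\<in>{KK j..p}. n - rr j (Oj Ord j l))"
  proof (rule prod.reindex[unfolded comp_def])
    show "inj_on (Oj Ord j) {KK j..p}"
      using Oj_bij[OF j] KK_range[of j] unfolding bij_betw_def by (auto intro: inj_on_subset)
  qed
  also have "\<dots> = (\<Prod>l\<in>{KK j..p}. kk n Ord j (Oj Ord j l))"
    using kk_eq[OF j] Oj_lt[OF j] KK_range[of j] by (intro prod.cong) auto
  finally show ?thesis .
qed

lemma opt_rank:
  assumes j: "j < n" and t1A: "t1 \<notin> Aset j" and t2A: "t2 \<notin> Aset j"
  shows "int (rank n p (Rel (okey j t1 t2 sc)) (rv j)) =
     int n ^ p + 1 - (\<Prod>l\<in>{KK j..p}. int (kk n Ord j (Oj Ord j l)))"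
proof -
  let ?k = "okey j t1 t2 sc"
  have rvA: "rv j \<in> Aset j" using rv_Aset[OF j] .
  have rvB: "rv j \<in> bundles n p" using rv_bundle[OF j] .
  have krv: "?k (rv j) = p + 3" using rvA t1A t2A unfolding okey_def by auto
  have set: "{a \<in> bundles n p. kf ?k a \<le> kf ?k (rv j)} = (bundles n p - Aset j) \<union> {rv j}"
  proof (intro equalityI subsetI)
    fix a assume a: "a \<in> {a \<in> bundles n p. kf ?k a \<le> kf ?k (rv j)}"
    show "a \<in> (bundles n p - Aset j) \<union> {rv j}"
    proof (rule ccontr)
      assume "a \<notin> (bundles n p - Aset j) \<union> {rv j}"
      hence aA: "a \<in> Aset j" "a \<noteq> rv j" using a by auto
      hence "?k a \<ge> p + 4" using t1A t2A unfolding okey_def by auto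
      hence "kf ?k (rv j) < kf ?k a" using kf_less[OF rvB, of a ?k] a krv by auto
      thus False using a by simp
    qed
  next
    fix a assume a: "a \<in> (bundles n p - Aset j) \<union> {rv j}"
    show "a \<in> {a \<in> bundles n p. kf ?k a \<le> kf ?k (rv j)}"
    proof (cases "a = rv j")
      case True thus ?thesis using rvB by simp
    next
      case False
      hence "a \<in> bundles n p" "a \<notin> Aset j" using a by auto
      moreover hence "?k a < ?k (rv j)" using krv gt_le[of j a] unfolding okey_def by auto
      ultimately show ?thesis using kf_less[OF _ rvB, of a ?k] by auto
    qed
  qed
  have fA: "finite (Aset j)" using Aset_sub finite_bundles by (rule finite_subset)
  have "rank n p (Rel ?k) (rv j) = card ((bundles n p - Aset j) \<union> {rv j})"
    using rank_Rel[OF rvB] set by simp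
  also have "\<dots> = card (bundles n p) - card (Aset j) + 1"
  proof -
    have "card (bundles n p - Aset j) = card (bundles n p) - card (Aset j)"
      using Aset_sub by (simp add: card_Diff_subset fA)
    moreover have "rv j \<notin> bundles n p - Aset j" using rvA by simp
    ultimately show ?thesis using finite_bundles by simp
  qed
  finally have r: "rank n p (Rel ?k) (rv j) = n ^ p - card (Aset j) + 1" using card_bundles by simp
  have le: "card (Aset j) \<le> n ^ p" using card_mono[OF finite_bundles Aset_sub] card_bundles by simp
  show ?thesis unfolding r using le card_Aset[OF j] by (simp add: of_nat_diff)
qed


definition Wset :: "nat \<Rightarrow> (nat \<Rightarrow> nat \<Rightarrow> nat list) \<Rightarrow> nat list set" where
  "Wset j Wf = (\<lambda>(l, d). Wf l d) ` (SIGMA l:{..<p}. {rr j l<..<n})"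

definition Pmin :: "nat \<Rightarrow> nat list \<Rightarrow> nat" where
  "Pmin j b = Min {ps j l | l. l < p \<and> b ! l \<noteq> rr j l}"

definition pkey :: "nat \<Rightarrow> nat list \<Rightarrow> nat list \<Rightarrow> (nat \<Rightarrow> nat \<Rightarrow> nat list) \<Rightarrow> nat list \<Rightarrow> nat" where
  "pkey j tau sc Wf b = (if b = rv j then 2 else if b = tau then 0 else if b \<notin> Wset j Wf then 1
     else 3 + 2 * (N - Pmin j b) + (if b = sc then 0 else 1))"

definition WC :: "nat \<Rightarrow> (nat \<Rightarrow> nat \<Rightarrow> nat list) \<Rightarrow> bool" where
  "WC j Wf \<longleftrightarrow> (\<forall>l d. l < p \<longrightarrow> rr j l < d \<longrightarrow> d < n \<longrightarrow>
     Wf l d \<in> bundles n p \<and> Wf l d ! l = d \<and>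
     (\<forall>l'<p. ps j l' < ps j l \<longrightarrow> Wf l d ! l' = rr j l') \<and>
     (\<forall>l'<p. ps j l < ps j l' \<longrightarrow> cnt l' (ps j l) \<le> Wf l d ! l'))"

lemma Pmin_W: assumes wc: "WC j Wf" and l: "l < p" "rr j l < d" "d < n"
  shows "Pmin j (Wf l d) = ps j l"
proof -
  let ?S = "{ps j l' | l'. l' < p \<and> Wf l d ! l' \<noteq> rr j l'}"
  have w: "Wf l d ! l = d" "\<forall>l'<p. ps j l' < ps j l \<longrightarrow> Wf l d ! l' = rr j l'"
    using wc l unfolding WC_def by auto
  have fin: "finite ?S" by simp
  have mem: "ps j l \<in> ?S" using w l by auto
  have "x \<in> ?S \<Longrightarrow> ps j l \<le> x" for x using w by (auto simp: not_less[symmetric])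
  thus ?thesis unfolding Pmin_def using fin mem by (intro Min_eqI) auto
qed

lemma W_mem: "WC j Wf \<Longrightarrow> b \<in> Wset j Wf \<Longrightarrow> \<exists>l d. l < p \<and> rr j l < d \<and> d < n \<and> b = Wf l d"
  unfolding Wset_def by fastforce

lemma W_sub: "WC j Wf \<Longrightarrow> Wset j Wf \<subseteq> bundles n p"
  unfolding Wset_def WC_def by auto

lemma W_ne_rv: "WC j Wf \<Longrightarrow> j < n \<Longrightarrow> rv j \<notin> Wset j Wf"
proof
  assume wc: "WC j Wf" and j: "j < n" and "rv j \<in> Wset j Wf"
  then obtain l d where l: "l < p" "rr j l < d" "d < n" "rv j = Wf l d" using W_mem by blast
  hence "Wf l d ! l = d" using wc unfolding WC_def by auto
  thus False using l by (metis less_irrefl rv_nth)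
qed

lemma worst_eq:
  assumes V: "available n p s j \<subseteq> bundles n p" and m: "m \<in> available n p s j" "m ! i = d"
    and mx: "\<forall>b\<in>available n p s j. b ! i = d \<longrightarrow> kf k b \<le> kf k m"
  shows "worst n p (Rel k) s j i d = m"
  unfolding worst_def
proof (rule the_equality)
  show "m \<in> available n p s j \<and> m ! i = d \<and> (\<forall>b'\<in>available n p s j. b' ! i = d \<longrightarrow> (b', m) \<in> Rel k)"
    using m mx V unfolding Rel_def by auto
  fix b assume b: "b \<in> available n p s j \<and> b ! i = d \<and> (\<forall>b'\<in>available n p s j. b' ! i = d \<longrightarrow> (b', b) \<in> Rel k)"
  hence "kf k m \<le> kf k b" using m unfolding Rel_def by auto
  moreover have "kf k b \<le> kf k m" using mx b by auto
  ultimately have "kf k b = kf k m" by simp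
  thus "b = m" using kf_inj V b m by auto
qed

lemma pess_ok:
  assumes t: "t < N" and o: "Ord ! t = (j, i)" and wc: "WC j Wf"
    and tauW: "tau \<notin> Wset j Wf"
  shows "pess_choice n p (Rel (pkey j tau sc Wf)) (st t) j i = rr j i"
proof -
  let ?k = "pkey j tau sc Wf"
  have ji: "j < n" "i < p" using nth_mem'[OF t] o by auto
  have pj: "ps j i = t" using ps_of_nth[OF t o] .
  let ?V = "avail j t"
  have AV: "available n p (st t) j = ?V" using available_st[OF ji(1)] .
  have rem: "remaining n (st t) i = {d. rr j i \<le> d \<and> d < n}"
    using remaining_st[OF ji(2)] pj unfolding rr_def by simp
  have fin: "finite ?V" using avail_sub finite_bundles by (rule finite_subset)
  have rvV: "rv j \<in> ?V" using rv_avail[OF ji(1)] .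
  have WV: "Wf i d \<in> ?V" if d: "rr j i < d" "d < n" for d
  proof -
    have w: "Wf i d \<in> bundles n p" "Wf i d ! i = d"
      "\<forall>l'<p. ps j l' < ps j i \<longrightarrow> Wf i d ! l' = rr j l'"
      "\<forall>l'<p. ps j i < ps j l' \<longrightarrow> cnt l' (ps j i) \<le> Wf i d ! l'"
      using wc ji d unfolding WC_def by auto
    have "\<forall>l<p. if ps j l < t then Wf i d ! l = rr j l else cnt l t \<le> Wf i d ! l"
    proof (intro allI impI)
      fix l assume l: "l < p"
      show "if ps j l < t then Wf i d ! l = rr j l else cnt l t \<le> Wf i d ! l"
      proof (cases "ps j l = t")
        case True
        hence "l = i" using ps_inj[of j l j i] ji l pj by auto
        thus ?thesis using True w d pj unfolding rr_def by auto
      qed (use w l pj in \<open>auto simp: not_less\<close>)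
    qed
    thus ?thesis using w unfolding avail_def by auto
  qed
  have exw: "\<exists>w\<in>?V. w ! i = d \<and> (\<forall>b\<in>?V. b ! i = d \<longrightarrow> kf ?k b \<le> kf ?k w)" if d: "rr j i \<le> d" "d < n" for d
  proof -
    have ne: "{b \<in> ?V. b ! i = d} \<noteq> {}"
    proof (cases "d = rr j i")
      case True thus ?thesis using rvV ji by auto
    next
      case False thus ?thesis using WV[of d] d wc ji unfolding WC_def by fastforce
    qed
    obtain w where "w \<in> {b \<in> ?V. b ! i = d}" "\<forall>b\<in>{b \<in> ?V. b ! i = d}. kf ?k b \<le> kf ?k w"
      using exists_max[OF _ ne] fin by (metis (no_types, lifting) finite_subset mem_Collect_eq subsetI)
    thus ?thesis by auto
  qed
  define w where "w d = (SOME x. x \<in> ?V \<and> x ! i = d \<and> (\<forall>b\<in>?V. b ! i = d \<longrightarrow> kf ?k b \<le> kf ?k x))" for d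
  have wp: "w d \<in> ?V \<and> w d ! i = d \<and> (\<forall>b\<in>?V. b ! i = d \<longrightarrow> kf ?k b \<le> kf ?k (w d))"
    if "rr j i \<le> d" "d < n" for d
    unfolding w_def by (rule someI_ex) (use exw[OF that] in blast)
  have worst: "worst n p (Rel ?k) (st t) j i d = w d" if "rr j i \<le> d" "d < n" for d
    using worst_eq[of "st t" j "w d" i d ?k] wp[OF that] AV avail_sub by auto
  have key_lt: "kf ?k (w (rr j i)) < kf ?k (w d)" if d: "rr j i < d" "d < n" for d
  proof -
    let ?r = "w (rr j i)"
    have r: "?r \<in> ?V" "?r ! i = rr j i" using wp[of "rr j i"] rr_lt[OF ji(1)] by auto
    have k1: "?k ?r < 3 + 2 * (N - t)"
    proof -
      have "?k ?r \<le> 2" if "?r \<notin> Wset j Wf \<or> ?r = tau" using that unfolding pkey_def by auto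
      moreover have "?k ?r < 3 + 2 * (N - t)" if rW: "?r \<in> Wset j Wf" "?r \<noteq> tau"
      proof -
        obtain l d' where l: "l < p" "rr j l < d'" "d' < n" "?r = Wf l d'" using W_mem[OF wc rW(1)] by blast
        have wl: "Wf l d' ! l = d'" using wc l unfolding WC_def by auto
        have "ps j l \<noteq> t"
        proof
          assume "ps j l = t"
          hence "l = i" using ps_inj[of j l j i] ji l pj by auto
          thus False using r wl l by simp
        qed
        moreover have "\<not> ps j l < t"
        proof
          assume "ps j l < t"
          hence "?r ! l = rr j l" using r(1) l unfolding avail_def by auto
          thus False using wl l by simp
        qed
        ultimately have "t < ps j l" by simp
        moreover have "Pmin j ?r = ps j l" using Pmin_W[OF wc l(1-3)] l by simp
        moreover have "?r \<noteq> rv j" using W_ne_rv[OF wc ji(1)] rW by auto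
        ultimately show ?thesis using rW t unfolding pkey_def by auto
      qed
      ultimately show ?thesis by fastforce
    qed
    have k2: "?k (Wf i d) \<ge> 3 + 2 * (N - t)"
    proof -
      have "Wf i d \<in> Wset j Wf" unfolding Wset_def using ji d by auto
      moreover hence "Wf i d \<noteq> tau" "Wf i d \<noteq> rv j" using tauW W_ne_rv[OF wc ji(1)] by auto
      moreover have "Pmin j (Wf i d) = t" using Pmin_W[OF wc ji(2) d] pj by simp
      ultimately show ?thesis unfolding pkey_def by auto
    qed
    have rB: "?r \<in> bundles n p" using r avail_sub by auto
    have "kf ?k ?r < kf ?k (Wf i d)"
      using kf_less[OF rB, of "Wf i d" ?k] k1 k2 WV[OF d] avail_sub by auto
    also have "\<dots> \<le> kf ?k (w d)" using wp[of d] d WV[OF d] wc ji unfolding WC_def by auto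
    finally show ?thesis .
  qed
  show ?thesis
    unfolding pess_choice_def rem
  proof (rule the_equality)
    show "rr j i \<in> {d. rr j i \<le> d \<and> d < n} \<and>
      (\<forall>d'\<in>{d. rr j i \<le> d \<and> d < n}. (worst n p (Rel ?k) (st t) j i (rr j i), worst n p (Rel ?k) (st t) j i d') \<in> Rel ?k)"
    proof (intro conjI ballI)
      show "rr j i \<in> {d. rr j i \<le> d \<and> d < n}" using rr_lt[OF ji(1)] by simp
      fix d' assume d': "d' \<in> {d. rr j i \<le> d \<and> d < n}"
      have "kf ?k (w (rr j i)) \<le> kf ?k (w d')" using key_lt[of d'] d' by (cases "d' = rr j i") auto
      moreover have "w (rr j i) \<in> bundles n p" "w d' \<in> bundles n p"
        using wp[of "rr j i"] wp[of d'] d' rr_lt[OF ji(1)] avail_sub by auto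
      ultimately show "(worst n p (Rel ?k) (st t) j i (rr j i), worst n p (Rel ?k) (st t) j i d') \<in> Rel ?k"
        using worst[of "rr j i"] worst[of d'] d' rr_lt[OF ji(1)] unfolding Rel_def by auto
    qed
    fix d assume d: "d \<in> {d. rr j i \<le> d \<and> d < n} \<and>
      (\<forall>d'\<in>{d. rr j i \<le> d \<and> d < n}. (worst n p (Rel ?k) (st t) j i d, worst n p (Rel ?k) (st t) j i d') \<in> Rel ?k)"
    show "d = rr j i"
    proof (rule ccontr)
      assume ne: "d \<noteq> rr j i"
      have "(w d, w (rr j i)) \<in> Rel ?k"
        using d worst[of d] worst[of "rr j i"] rr_lt[OF ji(1)] by auto
      hence "kf ?k (w d) \<le> kf ?k (w (rr j i))" unfolding Rel_def by auto
      thus False using key_lt[of d] d ne by auto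
    qed
  qed
qed

lemma card_W: assumes wc: "WC j Wf" and j: "j < n"
  shows "card (Wset j Wf) = (\<Sum>l<p. n - 1 - rr j l)"
proof -
  have inj: "inj_on (\<lambda>(l, d). Wf l d) (SIGMA l:{..<p}. {rr j l<..<n})"
  proof (rule inj_onI, clarsimp)
    fix l d l' d'
    assume a: "l < p" "rr j l < d" "d < n" "l' < p" "rr j l' < d'" "d' < n" "Wf l d = Wf l' d'"
    have "ps j l = ps j l'" using Pmin_W[OF wc a(1-3)] Pmin_W[OF wc a(4-6)] a(7) by simp
    hence "l = l'" using ps_inj[of j l j l'] j a by auto
    moreover hence "d = d'" using wc a unfolding WC_def by metis
    ultimately show "l = l' \<and> d = d'" by simp
  qed
  have "card (Wset j Wf) = card (SIGMA l:{..<p}. {rr j l<..<n})"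
    unfolding Wset_def using card_image[OF inj] .
  also have "\<dots> = (\<Sum>l<p. card {rr j l<..<n})" by (rule card_SigmaI) auto
  also have "\<dots> = (\<Sum>l<p. n - 1 - rr j l)" by simp
  finally show ?thesis .
qed

lemma pess_rank:
  assumes j: "j < n" and wc: "WC j Wf" and tauW: "tau \<notin> Wset j Wf"
  shows "int (rank n p (Rel (pkey j tau sc Wf)) (rv j)) =
     int n ^ p - (\<Sum>l\<in>{1..p}. int (kk n Ord j (Oj Ord j l)) - 1)"
proof -
  let ?k = "pkey j tau sc Wf"
  have rvB: "rv j \<in> bundles n p" using rv_bundle[OF j] .
  have rvW: "rv j \<notin> Wset j Wf" using W_ne_rv[OF wc j] .
  have set: "{a \<in> bundles n p. kf ?k a \<le> kf ?k (rv j)} = bundles n p - Wset j Wf"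
  proof (intro equalityI subsetI)
    fix a assume a: "a \<in> {a \<in> bundles n p. kf ?k a \<le> kf ?k (rv j)}"
    show "a \<in> bundles n p - Wset j Wf"
    proof (rule ccontr)
      assume "a \<notin> bundles n p - Wset j Wf"
      hence aW: "a \<in> Wset j Wf" using a by auto
      hence "?k a \<ge> 3" "?k (rv j) \<le> 2" using tauW rvW unfolding pkey_def by auto
      hence "kf ?k (rv j) < kf ?k a" using kf_less[OF rvB, of a ?k] a by auto
      thus False using a by simp
    qed
  next
    fix a assume a: "a \<in> bundles n p - Wset j Wf"
    show "a \<in> {a \<in> bundles n p. kf ?k a \<le> kf ?k (rv j)}"
    proof (cases "a = rv j")
      case True thus ?thesis using rvB by simp
    next
      case False
      hence "?k a < ?k (rv j)" using a rvW unfolding pkey_def by auto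
      thus ?thesis using kf_less[OF _ rvB, of a ?k] a by auto
    qed
  qed
  have fW: "finite (Wset j Wf)" using W_sub[OF wc] finite_bundles by (rule finite_subset)
  have r: "rank n p (Rel ?k) (rv j) = n ^ p - card (Wset j Wf)"
    using rank_Rel[OF rvB] set card_Diff_subset[OF fW W_sub[OF wc]] card_bundles by simp
  have le: "card (Wset j Wf) \<le> n ^ p" using card_mono[OF finite_bundles W_sub[OF wc]] card_bundles by simp
  have sum: "(\<Sum>l\<in>{1..p}. int (kk n Ord j (Oj Ord j l)) - 1) = (\<Sum>i<p. int (kk n Ord j i) - 1)"
    using sum.reindex_bij_betw[OF Oj_bij[OF j], of "\<lambda>i. int (kk n Ord j i) - 1"]
    by (simp add: lessThan_atLeast0)
  also have "\<dots> = (\<Sum>i<p. int (n - 1 - rr j i))"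
  proof (rule sum.cong[OF refl])
    fix i assume "i \<in> {..<p}"
    thus "int (kk n Ord j i) - 1 = int (n - 1 - rr j i)" using kk_eq[OF j, of i] rr_lt[OF j, of i] by auto
  qed
  also have "\<dots> = int (\<Sum>i<p. n - 1 - rr j i)" by simp
  finally show ?thesis unfolding r using le card_W[OF wc j] by (simp add: of_nat_diff)
qed

end
context cs2 begin

lemma N_pos: "0 < N" using N_eq n1 p1 by simp

definition g1 :: nat where "g1 = fst (Ord ! 0)"
definition cs0 :: nat where "cs0 = snd (Ord ! 0)"

lemma g1_is: "g1 < n" "cs0 < p" "ps g1 cs0 = 0"
  using nth_mem'[OF N_pos] ps_of_nth[OF N_pos, of g1 cs0] unfolding g1_def cs0_def by auto

lemma rr_g1: "rr g1 cs0 = 0" unfolding rr_def cnt_def using g1_is by simp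

lemma rr_other: assumes j: "j < n" "j \<noteq> g1" shows "rr j cs0 \<ge> 1"
proof -
  have "ps j cs0 \<noteq> 0" using ps_inj[of j "cs0" g1 "cs0"] j g1_is by auto
  hence "rr g1 cs0 < rr j cs0" using rr_lt_cnt[of g1 "cs0" "ps j cs0"] g1_is unfolding rr_def[of j] by simp
  thus ?thesis by simp
qed

lemma nil_not_bundle: "[] \<notin> bundles n p" unfolding bundles_def using p1 by auto

definition T :: "nat \<Rightarrow> nat list" where
  "T j = (rv j)[cs0 := (if rr j cs0 = 0 then n - 1 else rr j cs0 - 1)]"

lemma T_nth: "l < p \<Longrightarrow> T j ! l = (if l = cs0 then (if rr j cs0 = 0 then n - 1 else rr j cs0 - 1) else rr j l)"
  unfolding T_def using g1_is by (simp add: nth_list_update)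

lemma T_bundle: "j < n \<Longrightarrow> T j \<in> bundles n p"
  unfolding bundles_def using T_nth rr_lt n1 by (auto simp: T_def) (metis T_nth diff_less less_imp_diff_less zero_less_one)


lemma low_not_A: assumes l: "l < p" and lt: "b ! l < rr j l" shows "b \<notin> Aset j"
proof
  assume "b \<in> Aset j"
  hence "if ps j l < tK j then b ! l = rr j l else rr j l \<le> b ! l" using l unfolding Aset_def by blast
  thus False using lt by (simp split: if_splits)
qed

lemma low_not_avail: assumes "j < n" "l < p" "b ! l < rr j l" shows "b \<notin> avail j (ps j l)"
proof
  assume "b \<in> avail j (ps j l)"
  hence "cnt l (ps j l) \<le> b ! l" using assms unfolding avail_def by auto
  thus False using assms unfolding rr_def by simp
qed

definition gW :: "nat \<Rightarrow> nat \<Rightarrow> nat \<Rightarrow> nat list" where "gW j l d = (rv j)[l := d]"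

lemma gW_WC: assumes j: "j < n" shows "WC j (gW j)"
  unfolding WC_def
proof (intro allI impI)
  fix l d assume l: "l < p" and d: "rr j l < d" "d < n"
  have 1: "gW j l d \<in> bundles n p" unfolding gW_def bundles_def using rr_lt[OF j] d l
    by (auto simp: nth_list_update)
  have 2: "gW j l d ! l = d" unfolding gW_def using l by simp
  have 3: "\<forall>l'<p. ps j l' < ps j l \<longrightarrow> gW j l d ! l' = rr j l'"
    unfolding gW_def using l by (auto simp: nth_list_update)
  have 4: "\<forall>l'<p. ps j l < ps j l' \<longrightarrow> cnt l' (ps j l) \<le> gW j l d ! l'"
  proof (intro allI impI)
    fix l' assume l': "l' < p" "ps j l < ps j l'"
    hence "l' \<noteq> l" by auto
    hence "gW j l d ! l' = rr j l'" unfolding gW_def using l' by simp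
    thus "cnt l' (ps j l) \<le> gW j l d ! l'" unfolding rr_def using l' by (simp add: cnt_mono)
  qed
  show "gW j l d \<in> bundles n p \<and> gW j l d ! l = d \<and>
     (\<forall>l'<p. ps j l' < ps j l \<longrightarrow> gW j l d ! l' = rr j l') \<and>
     (\<forall>l'<p. ps j l < ps j l' \<longrightarrow> cnt l' (ps j l) \<le> gW j l d ! l')" using 1 2 3 4 by blast
qed

lemma low_not_gW: assumes j: "j < n" and l: "l < p" and lt: "b ! l < rr j l" shows "b \<notin> Wset j (gW j)"
proof
  assume "b \<in> Wset j (gW j)"
  then obtain l' d where ld: "l' < p" "rr j l' < d" "d < n" "b = gW j l' d" using W_mem[OF gW_WC[OF j]] by blast
  show False
  proof (cases "l = l'")
    case True
    hence "b ! l = d" using ld unfolding gW_def by simp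
    thus False using ld lt True by simp
  next
    case False
    hence "b ! l = rr j l" using ld l unfolding gW_def by simp
    thus False using lt by simp
  qed
qed

lemma upd_choice: assumes j: "j < n" and l: "l < p" and x: "x < rr j l" and i: "i < p"
  and b: "b = (rv j)[l := x]" and av: "b \<in> avail j (ps j i)"
  shows "b ! i = rr j i"
proof (cases "i = l")
  case True thus ?thesis using low_not_avail[OF j l, of b] av b x l by simp
next
  case False thus ?thesis using b i by simp
qed

lemma T_low: assumes "j < n" "j \<noteq> g1" shows "T j ! cs0 < rr j cs0"
proof -
  have "rr j cs0 \<noteq> 0" using rr_other[OF assms] by simp
  thus ?thesis using T_nth[of cs0 j] g1_is by simp
qed

lemma T_upd: assumes "j < n" "j \<noteq> g1" shows "T j = (rv j)[cs0 := rr j cs0 - 1]"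
proof -
  have "rr j cs0 \<noteq> 0" using rr_other[OF assms] by simp
  thus ?thesis unfolding T_def by simp
qed

lemma T_g1: "T g1 = (rv g1)[cs0 := n - 1]" unfolding T_def using rr_g1 by simp

lemma T_g1_nth: "T g1 ! cs0 = n - 1" using T_nth[of cs0 g1] g1_is rr_g1 by simp


abbreviation r0 :: bool where "r0 \<equiv> (\<forall>l<p. rr g1 l = 0)"

lemma r0_tK: assumes r0 shows "tK g1 = 0"
proof -
  have c: "condK g1 1"
  proof -
    have "\<not> (\<exists>t. pos Ord (g1, Oj Ord g1 1) < t \<and> t < pos Ord (g1, Oj Ord g1 l) \<and> snd (Ord ! t) = Oj Ord g1 l)"
      if l: "1 < l" "l \<le> p" for l
    proof
      assume "\<exists>t. pos Ord (g1, Oj Ord g1 1) < t \<and> t < pos Ord (g1, Oj Ord g1 l) \<and> snd (Ord ! t) = Oj Ord g1 l"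
      then obtain t where t: "t < ps g1 (Oj Ord g1 l)" "snd (Ord ! t) = Oj Ord g1 l" unfolding ps_def by auto
      have ol: "Oj Ord g1 l < p" using Oj_lt[OF g1_is(1)] l by auto
      have tN: "t < N" using t(1) ps_lt[OF g1_is(1) ol] by auto
      obtain a where a: "Ord ! t = (a, Oj Ord g1 l)" using t(2) by (cases "Ord ! t") auto
      have an: "a < n" using nth_mem'[OF tN] a by auto
      have "ps a (Oj Ord g1 l) = t" using ps_of_nth[OF tN a] .
      hence "rr a (Oj Ord g1 l) < rr g1 (Oj Ord g1 l)" using rr_lt_cnt[OF an] t(1) unfolding rr_def[of g1] by simp
      thus False using assms ol by simp
    qed
    thus ?thesis using p1 by auto
  qed
  have "KK g1 \<le> 1" unfolding KK_def Kj_def by (rule Least_le) (use c in blast)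
  hence K: "KK g1 = 1" using KK_range[of g1] by simp
  obtain l where l: "1 \<le> l" "l \<le> p" "Oj Ord g1 l = cs0" using Oj_surj[OF g1_is(1,2)] by blast
  have "ps g1 (Oj Ord g1 1) \<le> ps g1 cs0"
    using Oj_mono[OF g1_is(1), of 1 l] l by (cases "l = 1") auto
  thus ?thesis unfolding tK_def K using g1_is by simp
qed

lemma r0_Aset: assumes r0 shows "Aset g1 = bundles n p"
  unfolding Aset_def using r0_tK[OF assms] assms by auto

lemma not_r0_tK: assumes "\<not> r0" shows "0 < tK g1"
proof (rule ccontr)
  assume "\<not> 0 < tK g1"
  hence tk: "tK g1 = 0" by simp
  obtain iq where iq: "iq < p" "rr g1 iq \<noteq> 0" using assms by auto
  have "{a. a < n \<and> ps a iq < ps g1 iq} \<noteq> {}" using iq unfolding rr_def cnt_def by (metis card.empty)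
  then obtain a where a: "a < n" "ps a iq < ps g1 iq" by auto
  have "ps a iq \<noteq> 0"
  proof
    assume "ps a iq = 0"
    hence "a = g1" using ps_inj[of a iq g1 cs0] a iq g1_is by auto
    thus False using a by simp
  qed
  hence "snd (Ord ! ps a iq) \<noteq> iq" using K1[OF g1_is(1) iq(1)] tk a by auto
  thus False using ps_lt[OF a(1) iq(1)] by simp
qed

lemma not_r0_n2: "\<not> r0 \<Longrightarrow> 2 \<le> n"
  using rr_lt[OF g1_is(1)] by (metis One_nat_def Suc_1 Suc_leI less_Suc0 not_le order.strict_trans1)

definition iq :: nat where "iq = (SOME l. l < p \<and> rr g1 l \<noteq> 0)"

lemma iq: "\<not> r0 \<Longrightarrow> iq < p \<and> rr g1 iq \<noteq> 0"
  unfolding iq_def by (rule someI_ex) auto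

definition Z :: "nat list" where "Z = (rv g1)[iq := rr g1 iq - 1]"

lemma Z_low: "\<not> r0 \<Longrightarrow> Z ! iq < rr g1 iq" unfolding Z_def using iq by auto

lemma Z_bundle: "\<not> r0 \<Longrightarrow> Z \<in> bundles n p"
  unfolding Z_def bundles_def using iq rr_lt[OF g1_is(1)] by (auto simp: nth_list_update less_imp_diff_less)

lemma Tg1_not_A: assumes "\<not> r0" shows "T g1 \<notin> Aset g1"
proof
  assume "T g1 \<in> Aset g1"
  hence "T g1 ! cs0 = rr g1 cs0" using not_r0_tK[OF assms] g1_is unfolding Aset_def by auto
  thus False using T_g1_nth rr_g1 not_r0_n2[OF assms] by simp
qed

definition ot1 where "ot1 j = (if j \<noteq> g1 then T j else if r0 then [] else Z)"
definition ot2 where "ot2 j = (if j \<noteq> g1 then [] else if r0 then [] else T g1)"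
definition osc where "osc j = (if j \<noteq> g1 then [] else if r0 then T g1 else [])"

lemma nil_notA: "[] \<notin> Aset j" using Aset_sub nil_not_bundle by auto
lemma nil_notavail: "[] \<notin> avail j t" using avail_sub nil_not_bundle by auto

lemma ot_A: "j < n \<Longrightarrow> ot1 j \<notin> Aset j \<and> ot2 j \<notin> Aset j"
  unfolding ot1_def ot2_def
  using nil_notA low_not_A[OF g1_is(2) T_low] low_not_A[OF _ Z_low] iq Tg1_not_A by auto

lemma ot_oc:
  assumes t: "t < N" and o: "Ord ! t = (j, i)"
  shows "(ot1 j \<in> avail j t \<longrightarrow> ot1 j ! i = rr j i) \<and>
         (ot2 j \<in> avail j t \<longrightarrow> ot2 j \<noteq> ot1 j \<longrightarrow> ot2 j ! i = rr j i \<or> ot1 j \<in> avail j t)"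
proof -
  have ji: "j < n" "i < p" using nth_mem'[OF t] o by auto
  have pj: "ps j i = t" using ps_of_nth[OF t o] .
  show ?thesis
  proof (cases "j = g1")
    case False
    have "T j \<in> avail j t \<Longrightarrow> T j ! i = rr j i"
      using upd_choice[OF ji(1) g1_is(2) _ ji(2) T_upd[OF ji(1) False]] T_low[OF ji(1) False] T_upd[OF ji(1) False] pj
      by simp
    thus ?thesis using False nil_notavail unfolding ot1_def ot2_def by auto
  next
    case True
    show ?thesis
    proof (cases r0)
      case True thus ?thesis using \<open>j = g1\<close> nil_notavail unfolding ot1_def ot2_def by auto
    next
      case nr: False
      have c1: "Z \<in> avail g1 t \<Longrightarrow> Z ! i = rr g1 i"
        using upd_choice[OF g1_is(1) _ _ ji(2), of iq "rr g1 iq - 1" Z] iq[OF nr] pj True Z_def by auto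
      have c2: "T g1 ! i = rr g1 i \<or> Z \<in> avail g1 t" if Ta: "T g1 \<in> avail g1 t"
      proof (cases "t = 0")
        case True
        have "Z \<in> avail g1 0" unfolding avail_def using Z_bundle[OF nr] by (simp add: cnt_def)
        thus ?thesis using True by simp
      next
        case False
        hence "T g1 ! cs0 = rr g1 cs0" using Ta g1_is unfolding avail_def by auto
        hence False using T_g1_nth rr_g1 not_r0_n2[OF nr] by simp
        thus ?thesis by simp
      qed
      show ?thesis using True nr c1 c2 unfolding ot1_def ot2_def by auto
    qed
  qed
qed


definition i2 :: nat where "i2 = (if cs0 = 0 then 1 else 0)"
definition ww :: nat where "ww = (if rr g1 i2 = 0 then 1 else 0)"
definition sW :: "nat \<Rightarrow> nat \<Rightarrow> nat list" where
  "sW l d = (if l = cs0 then ((rv g1)[cs0 := d])[i2 := ww] else (rv g1)[l := d])"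

abbreviation big :: bool where "big \<equiv> (p \<noteq> 1 \<and> n \<noteq> 1)"

lemma i2: "big \<Longrightarrow> i2 < p \<and> i2 \<noteq> cs0" unfolding i2_def using p1 by auto

lemma sW_WC: assumes big shows "WC g1 sW"
  unfolding WC_def
proof (intro allI impI)
  fix l d assume l: "l < p" and d: "rr g1 l < d" "d < n"
  show "sW l d \<in> bundles n p \<and> sW l d ! l = d \<and>
     (\<forall>l'<p. ps g1 l' < ps g1 l \<longrightarrow> sW l d ! l' = rr g1 l') \<and>
     (\<forall>l'<p. ps g1 l < ps g1 l' \<longrightarrow> cnt l' (ps g1 l) \<le> sW l d ! l')"
  proof (cases "l = cs0")
    case False
    hence "sW l d = gW g1 l d" unfolding sW_def gW_def by simp
    thus ?thesis using gW_WC[OF g1_is(1)] l d unfolding WC_def by simp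
  next
    case True
    have ii: "i2 < p" "i2 \<noteq> cs0" using i2[OF assms] by auto
    have wn: "ww < n" using assms n1 unfolding ww_def by auto
    have nth: "l' < p \<Longrightarrow> sW l d ! l' = (if l' = i2 then ww else if l' = cs0 then d else rr g1 l')" for l'
      unfolding sW_def using True ii g1_is by (auto simp: nth_list_update)
    have "sW l d \<in> bundles n p" unfolding bundles_def
      using nth rr_lt[OF g1_is(1)] wn d by (auto simp: sW_def)
    moreover have "\<forall>l'<p. ps g1 l < ps g1 l' \<longrightarrow> cnt l' (ps g1 l) \<le> sW l d ! l'"
      using True g1_is by (simp add: cnt_def)
    ultimately show ?thesis using nth True ii g1_is by auto
  qed
qed

lemma Tg1_not_sW: assumes big shows "T g1 \<notin> Wset g1 sW"
proof
  assume "T g1 \<in> Wset g1 sW"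
  then obtain l d where ld: "l < p" "rr g1 l < d" "d < n" "T g1 = sW l d" using W_mem[OF sW_WC[OF assms]] by blast
  have ii: "i2 < p" "i2 \<noteq> cs0" using i2[OF assms] by auto
  show False
  proof (cases "l = cs0")
    case True
    have "sW l d ! i2 = ww" unfolding sW_def using True ii by simp
    moreover have "T g1 ! i2 = rr g1 i2" using T_nth[of i2 g1] ii by simp
    ultimately show False using ld(4) unfolding ww_def by (simp split: if_splits)
  next
    case False
    have "sW l d ! cs0 = rr g1 cs0" unfolding sW_def using False g1_is by simp
    thus False using ld(4) T_g1_nth rr_g1 assms n1 by simp
  qed
qed

definition ptau where "ptau j = (if j \<noteq> g1 then T j else if big then T g1 else [])"
definition psc where "psc j = (if j = g1 \<and> \<not> big then T g1 else [])"
definition pW where "pW j = (if j = g1 \<and> big then sW else gW j)"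

lemma nil_notW: "WC j Wf \<Longrightarrow> [] \<notin> Wset j Wf" using W_sub nil_not_bundle by auto

lemma pW_ok: assumes j: "j < n" shows "WC j (pW j) \<and> ptau j \<notin> Wset j (pW j)"
proof (cases "j = g1")
  case False
  thus ?thesis unfolding pW_def ptau_def using gW_WC[OF j] low_not_gW[OF j g1_is(2) T_low[OF j False]] by simp
next
  case True
  thus ?thesis unfolding pW_def ptau_def using sW_WC Tg1_not_sW gW_WC[OF j] nil_notW[OF gW_WC[OF j]] by auto
qed


definition Prof :: "(nat \<Rightarrow> bool) \<Rightarrow> nat \<Rightarrow> nat list rel" where
  "Prof optim j = (if optim j then Rel (okey j (ot1 j) (ot2 j) (osc j)) else Rel (pkey j (ptau j) (psc j) (pW j)))"

lemma rank_le_S: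
  assumes b: "b \<in> bundles n p" and S: "finite S" and h: "\<And>a. a \<in> bundles n p \<Longrightarrow> a \<notin> S \<Longrightarrow> k b < k a"
  shows "rank n p (Rel k) b \<le> card S"
proof -
  have "{a \<in> bundles n p. kf k a \<le> kf k b} \<subseteq> S"
  proof
    fix a assume a: "a \<in> {a \<in> bundles n p. kf k a \<le> kf k b}"
    show "a \<in> S"
    proof (rule ccontr)
      assume "a \<notin> S"
      hence "kf k b < kf k a" using h[of a] a kf_less[OF b, of a k] by auto
      thus False using a by simp
    qed
  qed
  thus ?thesis using rank_Rel[OF b] card_mono[OF S] by simp
qed

lemma T_ne_rv: "j < n \<Longrightarrow> n \<ge> 2 \<Longrightarrow> T j \<noteq> rv j"
proof
  assume j: "j < n" and n: "n \<ge> 2" and e: "T j = rv j"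
  have "T j ! cs0 = rv j ! cs0" using e by simp
  thus False using T_nth[of cs0 j] g1_is n by (simp split: if_splits)
qed

lemma rank_T:
  assumes j: "j < n" and ne: "j \<noteq> g1"
  shows "rank n p (Prof optim j) (T j) = 1"
proof -
  have n2: "n \<ge> 2" using rr_other[OF j ne] rr_lt[OF j, of cs0] by simp
  have TB: "T j \<in> bundles n p" using T_bundle[OF j] .
  have "rank n p (Prof optim j) (T j) \<le> card {T j}"
    unfolding Prof_def
    using rank_le_S[OF TB, of "{T j}"] T_ne_rv[OF j n2] ne
    unfolding okey_def pkey_def ot1_def ptau_def by (auto split: if_splits)
  moreover have "rank n p (Prof optim j) (T j) \<ge> 1"
  proof -
    have "T j \<in> {a \<in> bundles n p. kf k a \<le> kf k (T j)}" for k using TB by simp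
    hence "card {a \<in> bundles n p. kf k a \<le> kf k (T j)} \<ge> 1" for k
      using finite_bundles by (metis (no_types, lifting) One_nat_def Suc_leI card_gt_0_iff empty_iff finite_subset mem_Collect_eq subsetI)
    thus ?thesis unfolding Prof_def using rank_Rel[OF TB] by simp
  qed
  ultimately show ?thesis by simp
qed

lemma rank_le_card: assumes "b \<in> bundles n p" shows "rank n p (Rel k) b \<le> n ^ p"
proof -
  have "rank n p (Rel k) b = card {a \<in> bundles n p. kf k a \<le> kf k b}" by (rule rank_Rel[OF assms])
  also have "\<dots> \<le> card (bundles n p)" by (rule card_mono[OF finite_bundles]) auto
  finally show ?thesis using card_bundles by simp
qed

lemma card2: "card {x, y} \<le> 2" by (cases "x = y") auto

lemma rank_g1: "rank n p (Prof optim g1) (T g1) \<le> 2"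
proof (cases "n = 1")
  case True
  have "rank n p (Prof optim g1) (T g1) \<le> n ^ p"
    unfolding Prof_def using rank_le_card[OF T_bundle[OF g1_is(1)]] by simp
  thus ?thesis using True by simp
next
  case False
  hence n2: "n \<ge> 2" using n1 by simp
  have TB: "T g1 \<in> bundles n p" using T_bundle[OF g1_is(1)] .
  have Tne: "T g1 \<noteq> rv g1" using T_ne_rv[OF g1_is(1) n2] .
  have Tnil: "T g1 \<noteq> []" using TB nil_not_bundle by auto
  show ?thesis
  proof (cases "optim g1")
    case True
    show ?thesis
    proof (cases r0)
      case True
      have "rank n p (Rel (okey g1 (ot1 g1) (ot2 g1) (osc g1))) (T g1) \<le> card {rv g1, T g1}"
      proof (rule rank_le_S[OF TB])
        fix a assume a: "a \<in> bundles n p" "a \<notin> {rv g1, T g1}"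
        have o: "ot1 g1 = []" "ot2 g1 = []" "osc g1 = T g1" using True unfolding ot1_def ot2_def osc_def by auto
        have anil: "a \<noteq> []" using a nil_not_bundle by auto
        have k1: "okey g1 [] [] (T g1) (T g1) = p + 4"
          unfolding okey_def using Tnil Tne TB r0_Aset[OF True] by simp
        have k2: "okey g1 [] [] (T g1) a = p + 5"
          unfolding okey_def using anil a r0_Aset[OF True] by simp
        show "okey g1 (ot1 g1) (ot2 g1) (osc g1) (T g1) < okey g1 (ot1 g1) (ot2 g1) (osc g1) a"
          unfolding o using k1 k2 by simp
      qed simp
      thus ?thesis using \<open>optim g1\<close> card2[of "rv g1" "T g1"] unfolding Prof_def by simp
    next
      case False
      have "rank n p (Rel (okey g1 (ot1 g1) (ot2 g1) (osc g1))) (T g1) \<le> card {Z, T g1}"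
      proof (rule rank_le_S[OF TB])
        fix a assume a: "a \<in> bundles n p" "a \<notin> {Z, T g1}"
        have o: "ot1 g1 = Z" "ot2 g1 = T g1" "osc g1 = []" using False unfolding ot1_def ot2_def osc_def by auto
        have k1: "okey g1 Z (T g1) [] (T g1) \<le> 1" unfolding okey_def by simp
        have k2: "okey g1 Z (T g1) [] a \<ge> 2" using a unfolding okey_def by simp
        show "okey g1 (ot1 g1) (ot2 g1) (osc g1) (T g1) < okey g1 (ot1 g1) (ot2 g1) (osc g1) a"
          unfolding o using k1 k2 by simp
      qed simp
      thus ?thesis using \<open>optim g1\<close> card2[of Z "T g1"] unfolding Prof_def by simp
    qed
  next
    case False
    show ?thesis
    proof (cases big)
      case True
      have "rank n p (Rel (pkey g1 (ptau g1) (psc g1) (pW g1))) (T g1) \<le> card {T g1}"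
      proof (rule rank_le_S[OF TB])
        fix a assume a: "a \<in> bundles n p" "a \<notin> {T g1}"
        have o: "ptau g1 = T g1" "psc g1 = []" "pW g1 = sW" using True unfolding ptau_def psc_def pW_def by auto
        have k1: "pkey g1 (T g1) [] sW (T g1) = 0" unfolding pkey_def using Tne by simp
        have k2: "pkey g1 (T g1) [] sW a \<ge> 1" using a unfolding pkey_def by simp
        show "pkey g1 (ptau g1) (psc g1) (pW g1) (T g1) < pkey g1 (ptau g1) (psc g1) (pW g1) a"
          unfolding o using k1 k2 by simp
      qed simp
      thus ?thesis using False unfolding Prof_def by simp
    next
      case nb: False
      hence p: "p = 1" using n2 by simp
      hence c0: "cs0 = 0" using g1_is by simp
      have wc: "WC g1 (gW g1)" using gW_WC[OF g1_is(1)] .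
      have Tg: "T g1 = gW g1 0 (n - 1)" unfolding gW_def using T_g1 c0 by simp
      have TW: "T g1 \<in> Wset g1 (gW g1)" unfolding Wset_def Tg
        by (rule image_eqI[of _ _ "(0, n - 1)"]) (use p n2 rr_g1 c0 in auto)
      have PT: "Pmin g1 (T g1) = ps g1 0" unfolding Tg using Pmin_W[OF wc, of 0 "n - 1"] p n2 rr_g1 c0 by simp
      have aW: "a \<in> Wset g1 (gW g1) \<and> Pmin g1 a = ps g1 0" if a: "a \<in> bundles n p" "a \<noteq> rv g1" for a
      proof -
        have la: "length a = 1" "a ! 0 < n" using a p unfolding bundles_def by auto
        have p0: "0 < p" using p1 by simp
        have rg0: "rr g1 0 = 0" using rr_g1 c0 by simp
        have r0': "rv g1 ! 0 = 0" using rv_nth[OF p0, of g1] rg0 by simp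
        have ne0: "a ! 0 \<noteq> 0"
        proof
          assume a0: "a ! 0 = 0"
          have "a = rv g1"
          proof (rule nth_equalityI)
            show "length a = length (rv g1)" by (metis la(1) length_rv p)
            fix k assume "k < length a"
            hence "k = 0" using la(1) by simp
            thus "a ! k = rv g1 ! k" using a0 r0' by simp
          qed
          thus False using a by simp
        qed
        have ag: "a = gW g1 0 (a ! 0)" unfolding gW_def
        proof (rule nth_equalityI)
          show "length a = length ((rv g1)[0 := a ! 0])" by (metis la(1) length_rv p length_list_update)
          fix k assume "k < length a"
          hence "k = 0" using la(1) by simp
          thus "a ! k = (rv g1)[0 := a ! 0] ! k" using p0 by simp
        qed
        have "a \<in> Wset g1 (gW g1)" unfolding Wset_def
          by (rule image_eqI[of _ _ "(0, a ! 0)"]) (use ag p0 la ne0 rg0 in auto)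
        moreover have "Pmin g1 a = ps g1 0" using ag Pmin_W[OF wc p0, of "a ! 0"] la ne0 rg0 by simp
        ultimately show ?thesis by simp
      qed
      have "rank n p (Rel (pkey g1 (ptau g1) (psc g1) (pW g1))) (T g1) \<le> card {rv g1, T g1}"
      proof (rule rank_le_S[OF TB])
        fix a assume a: "a \<in> bundles n p" "a \<notin> {rv g1, T g1}"
        have anil: "a \<noteq> []" using a nil_not_bundle by auto
        have arv: "a \<noteq> rv g1" "a \<noteq> T g1" using a by auto
        have ka: "pkey g1 [] (T g1) (gW g1) a = 3 + 2 * (N - ps g1 0) + 1"
          using aW[OF a(1) arv(1)] anil arv unfolding pkey_def by simp
        have kT: "pkey g1 [] (T g1) (gW g1) (T g1) = 3 + 2 * (N - ps g1 0)"
          using TW PT Tne Tnil unfolding pkey_def by simp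
        show "pkey g1 (ptau g1) (psc g1) (pW g1) (T g1) < pkey g1 (ptau g1) (psc g1) (pW g1) a"
        proof -
          have o: "ptau g1 = []" "psc g1 = T g1" "pW g1 = gW g1" using nb unfolding ptau_def psc_def pW_def by auto
          show ?thesis unfolding o using ka kT by simp
        qed
      qed simp
      thus ?thesis using False card2[of "rv g1" "T g1"] unfolding Prof_def by simp
    qed
  qed
qed


lemma shift_bij: "bij_betw (\<lambda>x. if x = 0 then n - 1 else x - 1) {0..<n} {0..<n}"
proof (rule bij_betw_byWitness[where f' = "\<lambda>y. if y = n - 1 then 0 else y + 1"])
  show "\<forall>a\<in>{0..<n}. (if (if a = 0 then n - 1 else a - 1) = n - 1 then 0 else (if a = 0 then n - 1 else a - 1) + 1) = a"
  proof
    fix a assume "a \<in> {0..<n}"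
    thus "(if (if a = 0 then n - 1 else a - 1) = n - 1 then 0 else (if a = 0 then n - 1 else a - 1) + 1) = a"
      by (cases "a = 0") auto
  qed
  show "\<forall>a'\<in>{0..<n}. (if (if a' = n - 1 then 0 else a' + 1) = 0 then n - 1 else (if a' = n - 1 then 0 else a' + 1) - 1) = a'"
  proof
    fix a assume "a \<in> {0..<n}"
    thus "(if (if a = n - 1 then 0 else a + 1) = 0 then n - 1 else (if a = n - 1 then 0 else a + 1) - 1) = a"
      by (cases "a = n - 1") auto
  qed
  show "(\<lambda>x. if x = 0 then n - 1 else x - 1) ` {0..<n} \<subseteq> {0..<n}" using n1 by auto
  show "(\<lambda>y. if y = n - 1 then 0 else y + 1) ` {0..<n} \<subseteq> {0..<n}" using n1 by auto
qed

lemma T_alloc: "is_allocation n p T"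
  unfolding is_allocation_def
proof (intro conjI allI impI)
  fix j assume "j < n" thus "T j \<in> bundles n p" by (rule T_bundle)
next
  fix i assume i: "i < p"
  show "bij_betw (\<lambda>j. T j ! i) {0..<n} {0..<n}"
  proof (cases "i = cs0")
    case False
    have e: "\<And>j. j \<in> {0..<n} \<Longrightarrow> T j ! i = rr j i" using T_nth[OF i] False by simp
    show ?thesis by (rule iffD2[OF bij_betw_cong[OF e] rr_bij[OF i]])
  next
    case True
    have b: "bij_betw ((\<lambda>x. if x = 0 then n - 1 else x - 1) \<circ> (\<lambda>j. rr j i)) {0..<n} {0..<n}"
      by (rule bij_betw_trans[OF rr_bij[OF i] shift_bij])
    have e: "\<And>j. j \<in> {0..<n} \<Longrightarrow> T j ! i = ((\<lambda>x. if x = 0 then n - 1 else x - 1) \<circ> (\<lambda>j. rr j i)) j"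
      using T_nth[OF i] True by simp
    show ?thesis by (rule iffD2[OF bij_betw_cong[OF e] b])
  qed
qed

lemma csam_Prof: "j < n \<Longrightarrow> csam n p Ord optim (Prof optim) j = rv j"
proof (rule csam_eq)
  fix t j i assume t: "t < N" and o: "Ord ! t = (j, i)"
  have j: "j < n" using nth_mem'[OF t] o by auto
  show "(if optim j then opt_choice n p (Prof optim j) (st t) j i else pess_choice n p (Prof optim j) (st t) j i) = rr j i"
  proof (cases "optim j")
    case True
    have "opt_choice n p (Rel (okey j (ot1 j) (ot2 j) (osc j))) (st t) j i = rr j i"
      using opt_ok[OF t o] ot_A[OF j] ot_oc[OF t o] by blast
    thus ?thesis using True unfolding Prof_def by simp
  next
    case False
    have "pess_choice n p (Rel (pkey j (ptau j) (psc j) (pW j))) (st t) j i = rr j i"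
      using pess_ok[OF t o] pW_ok[OF j] by blast
    thus ?thesis using False unfolding Prof_def by simp
  qed
qed

end

theorem theorem2:
  fixes n p :: nat and Ord :: "(nat \<times> nat) list" and optim :: "nat \<Rightarrow> bool"
  assumes "n \<ge> 1" and "p \<ge> 1" and "valid_order n p Ord"
  shows "\<exists>P. is_profile n p P \<and>
    (\<forall>j<n. optim j \<longrightarrow>
       int (rank n p (P j) (csam n p Ord optim P j)) =
         int n ^ p + 1 - (\<Prod>l\<in>{Kj p Ord j..p}. int (kk n Ord j (Oj Ord j l)))) \<and>
    (\<forall>j<n. \<not> optim j \<longrightarrow>
       int (rank n p (P j) (csam n p Ord optim P j)) =
         int n ^ p - (\<Sum>l\<in>{1..p}. int (kk n Ord j (Oj Ord j l)) - 1)) \<and>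
    (\<exists>A. is_allocation n p A \<and>
       (\<exists>j0<n. (\<forall>j<n. j \<noteq> j0 \<longrightarrow> rank n p (P j) (A j) = 1) \<and>
               rank n p (P j0) (A j0) \<le> 2))"
proof -
  interpret cs n p Ord using assms by unfold_locales
  have fb: "finite (bundles n p)" by (rule finite_bundles)
  have "\<exists>(f :: nat list \<Rightarrow> nat) M. f ` bundles n p = {i. i < M} \<and> inj_on f (bundles n p)"
    by (rule finite_imp_inj_to_nat_seg[OF fb])
  then obtain f :: "nat list \<Rightarrow> nat" and M :: nat where fM: "f ` bundles n p = {i. i < M}" "inj_on f (bundles n p)"
    by (elim exE conjE)
  have fM2: "\<And>b. b \<in> bundles n p \<Longrightarrow> f b < M"
  proof -
    fix b assume "b \<in> bundles n p"
    hence "f b \<in> f ` bundles n p" by (rule imageI)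
    thus "f b < M" using fM(1) by simp
  qed
  interpret cs2 n p Ord f M
    by (unfold_locales) (rule fM(2), rule fM2)
  show ?thesis
  proof (intro exI[of _ "Prof optim"] conjI allI impI)
    show "is_profile n p (Prof optim)" unfolding is_profile_def Prof_def using pref_Rel by simp
  next
    fix j assume j: "j < n" and o: "optim j"
    show "int (rank n p (Prof optim j) (csam n p Ord optim (Prof optim) j)) =
         int n ^ p + 1 - (\<Prod>l\<in>{Kj p Ord j..p}. int (kk n Ord j (Oj Ord j l)))"
      using opt_rank[OF j, of "ot1 j" "ot2 j" "osc j"] ot_A[OF j] csam_Prof[OF j] o
      unfolding Prof_def KK_def by simp
  next
    fix j assume j: "j < n" and o: "\<not> optim j"
    show "int (rank n p (Prof optim j) (csam n p Ord optim (Prof optim) j)) =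
         int n ^ p - (\<Sum>l\<in>{1..p}. int (kk n Ord j (Oj Ord j l)) - 1)"
      using pess_rank[OF j, of "pW j" "ptau j" "psc j"] pW_ok[OF j] csam_Prof[OF j] o
      unfolding Prof_def by simp
  next
    show "\<exists>A. is_allocation n p A \<and>
       (\<exists>j0<n. (\<forall>j<n. j \<noteq> j0 \<longrightarrow> rank n p (Prof optim j) (A j) = 1) \<and>
               rank n p (Prof optim j0) (A j0) \<le> 2)"
    proof (intro exI[of _ T] conjI exI[of _ g1])
      show "is_allocation n p T" by (rule T_alloc)
      show "g1 < n" by (rule g1_is(1))
      show "\<forall>j<n. j \<noteq> g1 \<longrightarrow> rank n p (Prof optim j) (T j) = 1" using rank_T by simp
      show "rank n p (Prof optim g1) (T g1) \<le> 2" by (rule rank_g1)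
    qed
  qed
qed

end
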